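(* Let $g$ be a symplectic potential on $P$ and let $\psi\in C^\infty(P)$ be strongly convex, such that $g_s:=g+s\psi$ is a symplectic potential for every $s>0$. Write $X_\psi=-\sum_{j}\frac{\partial\psi}{\partial x^j}\frac{\partial}{\partial\theta_j}$, and on $\check X_P$ let $z_j=\frac{\partial g}{\partial x^j}+i\theta_j$ and $z_j(s)=\frac{\partial g_s}{\partial x^j}+i\theta_j$. Let $s>0$. Then: (a) For each $j=1,\dots,n$ the series $e^{is\mathcal L_{X_\psi}}X_{z_j}=\sum_{k\ge0}\frac{(is)^k}{k!}\mathcal L_{X_\psi}^kX_{z_j}$ converges on $\check X_P$, and the vector fields so obtained span $\mathcal P_{g_s}$ at every point of $\check X_P$; that is, as distributions, $\mathcal P_{g_s}=e^{is\mathcal L_{X_\psi}}\mathcal P_g$. (b) Let $dZ_s$ denote the $I_{g_s}$-meromorphic section of the canonical bundle $K_{X_P}$ with divisor $-(D_1+\cdots+D_r)$, given on $\check X_P$ by $dZ_s=dz_1(s)\wedge\cdots\wedge dz_n(s)$, and let $dZ=dz_1\wedge\cdots\wedge dz_n$ be the corresponding section for $g$. Then $dZ_s=e^{is\mathcal L_{X_\psi}}dZ$, where the right-hand side is interpreted pointwise as a (convergent) power series in $s$.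
   Context: Let $P=\{x\in\mathbb R^n:\ell_j(x):=\langle\nu_j,x\rangle+\lambda_j\ge0,\ j=1,\dots,r\}$ be a Delzant polytope with primitive inward normals $\nu_j\in\mathbb Z^n$, interior $\check P$, and let $(X_P,\omega)$ be the associated compact symplectic toric $2n$-manifold with moment map $\mu:X_P\to P$; $D_j:=\mu^{-1}(\{\ell_j=0\}\cap P)$ are the toric divisors. On $\check X_P:=\mu^{-1}(\check P)\cong\check P\times\mathbb T^n$ use action-angle coordinates $(x,\theta)$, so $\mu(x,\theta)=x$ and $\omega=\sum_j dx^j\wedge d\theta_j$. For a (possibly complex-valued) function $f$, the Hamiltonian vector field $X_f$ is defined by $\iota_{X_f}\omega=df$ (extended $\mathbb C$-linearly). A symplectic potential is a function $g=g_P+\varphi$ on $\check P$, where $g_P=\frac12\sum_{j=1}^r\ell_j\log\ell_j$ and $\varphi\in C^\infty(P)$, such that the Hessian $H_g$ is positive definite on $\check P$ and $\det H_g=(\alpha\prod_j\ell_j)^{-1}$ for some smooth positive function $\alpha$ on $P$. Such $g$ determines a toric Kähler structure on $X_P$ (compatible with $\omega$) whose complex structure $I_g$ has, on $\check X_P$, holomorphic coordinates $z_j=\partial g/\partial x^j+i\theta_j$; the Kähler polarization $\mathcal P_g=T^{0,1}X_P$ is, on $\check X_P$, spanned by $\partial/\partial\bar z_j$, $j=1,\dots,n$. For a vector field $V$ and a tensor field $T$, $e^{\tau\mathcal L_V}T:=\sum_{k\ge0}\frac{\tau^k}{k!}\mathcal L_V^kT$ whenever this series converges. *)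

theory Defs
  imports "HOL-Analysis.Analysis"
begin

definition ell :: "('r \<Rightarrow> int^'n) \<Rightarrow> ('r \<Rightarrow> real) \<Rightarrow> 'r \<Rightarrow> real^'n::finite \<Rightarrow> real" where
  "ell nu lam j x = (\<Sum>i\<in>UNIV. real_of_int (nu j $ i) * x $ i) + lam j"

definition polytope :: "('r \<Rightarrow> int^'n) \<Rightarrow> ('r \<Rightarrow> real) \<Rightarrow> (real^'n::finite) set" where
  "polytope nu lam = {x. \<forall>j. 0 \<le> ell nu lam j x}"

text \<open>Delzant polytope: compact with nonempty interior, each inequality cuts out a
  facet, the normals are primitive, and at each vertex the normals of the facets
  through it form a Z-basis of Z^n (simple, rational, smooth).\<close>

definition delzant :: "('r \<Rightarrow> int^'n::finite) \<Rightarrow> ('r \<Rightarrow> real) \<Rightarrow> bool" where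
  "delzant nu lam \<longleftrightarrow>
     bounded (polytope nu lam) \<and> interior (polytope nu lam) \<noteq> {} \<and>
     (\<forall>j. aff_dim {x\<in>polytope nu lam. ell nu lam j x = 0} = int CARD('n) - 1) \<and>
     (\<forall>j. \<forall>d::int. (\<forall>i. d dvd nu j $ i) \<longrightarrow> \<bar>d\<bar> = 1) \<and>
     (\<forall>v. v extreme_point_of (polytope nu lam) \<longrightarrow>
        (\<exists>f::'n \<Rightarrow> 'r. bij_betw f UNIV {j. ell nu lam j v = 0} \<and>
                       \<bar>det (\<chi> i. nu (f i))\<bar> = 1))"

fun dder :: "('a::real_normed_vector \<Rightarrow> 'b::real_normed_vector) \<Rightarrow> 'a list \<Rightarrow> 'a \<Rightarrow> 'b" where
  "dder f [] = f"
| "dder f (v # vs) = (\<lambda>x. frechet_derivative (dder f vs) (at x) v)"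

text \<open>C^infinity on an open set: all iterated directional derivatives exist
  (and are differentiable, hence continuous).\<close>
definition smooth_on :: "'a::real_normed_vector set \<Rightarrow> ('a \<Rightarrow> 'b::real_normed_vector) \<Rightarrow> bool" where
  "smooth_on U f \<longleftrightarrow> open U \<and> (\<forall>vs. dder f vs differentiable_on U)"

definition smooth_upto :: "'a::real_normed_vector set \<Rightarrow> ('a \<Rightarrow> 'b::real_normed_vector) \<Rightarrow> bool" where
  "smooth_upto S f \<longleftrightarrow> (\<exists>U h. S \<subseteq> U \<and> smooth_on U h \<and> (\<forall>x\<in>S. h x = f x))"

definition pd :: "(real^'n::finite \<Rightarrow> real) \<Rightarrow> 'n \<Rightarrow> real^'n \<Rightarrow> real" where
  "pd f i x = frechet_derivative f (at x) (axis i 1)"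

definition hess :: "(real^'n::finite \<Rightarrow> real) \<Rightarrow> real^'n \<Rightarrow> real^'n^'n" where
  "hess f x = (\<chi> i j. pd (pd f j) i x)"

definition gP :: "('r::finite \<Rightarrow> int^'n::finite) \<Rightarrow> ('r \<Rightarrow> real) \<Rightarrow> real^'n \<Rightarrow> real" where
  "gP nu lam x = 1/2 * (\<Sum>j\<in>UNIV. ell nu lam j x * ln (ell nu lam j x))"

definition sympl_potential :: "('r::finite \<Rightarrow> int^'n::finite) \<Rightarrow> ('r \<Rightarrow> real) \<Rightarrow> (real^'n \<Rightarrow> real) \<Rightarrow> bool" where
  "sympl_potential nu lam g \<longleftrightarrow>
     (\<exists>\<phi> \<alpha>. smooth_upto (polytope nu lam) \<phi> \<and>
            (\<forall>x\<in>interior (polytope nu lam). g x = gP nu lam x + \<phi> x) \<and>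
            smooth_upto (polytope nu lam) \<alpha> \<and> (\<forall>x\<in>polytope nu lam. 0 < \<alpha> x) \<and>
            (\<forall>x\<in>interior (polytope nu lam).
               (\<forall>v. v \<noteq> 0 \<longrightarrow> 0 < v \<bullet> (hess g x *v v)) \<and>
               det (hess g x) = inverse (\<alpha> x * (\<Prod>j\<in>UNIV. ell nu lam j x))))"

definition strongly_convex_on :: "(real^'n::finite) set \<Rightarrow> (real^'n \<Rightarrow> real) \<Rightarrow> bool" where
  "strongly_convex_on S f \<longleftrightarrow> (\<exists>c>0. convex_on S (\<lambda>x. f x - c / 2 * norm x ^ 2))"

text \<open>Points of the open dense chart are (x, theta) with x in the interior of P;
  theta is taken in the universal cover R^n of the torus.  Complexified tangent
  vectors are pairs (a, b) = sum a_j d/dx^j + b_j d/dtheta_j.\<close>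

type_synonym 'n pt = "(real^'n) \<times> (real^'n)"
type_synonym 'n ctv = "(complex^'n) \<times> (complex^'n)"

definition chart :: "('r \<Rightarrow> int^'n::finite) \<Rightarrow> ('r \<Rightarrow> real) \<Rightarrow> 'n pt set" where
  "chart nu lam = interior (polytope nu lam) \<times> UNIV"

definition cvre :: "complex^'n::finite \<Rightarrow> real^'n" where "cvre a = (\<chi> i. Re (a $ i))"
definition cvim :: "complex^'n::finite \<Rightarrow> real^'n" where "cvim a = (\<chi> i. Im (a $ i))"

definition cre :: "'n::finite ctv \<Rightarrow> 'n pt" where "cre w = (cvre (fst w), cvre (snd w))"
definition cim :: "'n::finite ctv \<Rightarrow> 'n pt" where "cim w = (cvim (fst w), cvim (snd w))"

definition cscale :: "complex \<Rightarrow> 'n::finite ctv \<Rightarrow> 'n ctv" where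
  "cscale c w = (c *s fst w, c *s snd w)"

text \<open>C-linear extension of the differential of a complex function / vector field.\<close>
definition cdiff :: "('n::finite pt \<Rightarrow> complex) \<Rightarrow> 'n pt \<Rightarrow> 'n ctv \<Rightarrow> complex" where
  "cdiff f p w = frechet_derivative f (at p) (cre w) + \<i> * frechet_derivative f (at p) (cim w)"

definition cdiffV :: "('n::finite pt \<Rightarrow> 'n ctv) \<Rightarrow> 'n pt \<Rightarrow> 'n ctv \<Rightarrow> 'n ctv" where
  "cdiffV Y p w = frechet_derivative Y (at p) (cre w) + cscale \<i> (frechet_derivative Y (at p) (cim w))"

text \<open>omega = sum_j dx^j /\ dtheta_j, extended C-bilinearly.\<close>
definition omega :: "'n::finite ctv \<Rightarrow> 'n ctv \<Rightarrow> complex" where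
  "omega V W = (\<Sum>j\<in>UNIV. fst V $ j * snd W $ j - snd V $ j * fst W $ j)"

definition ham_vf :: "('n::finite pt \<Rightarrow> complex) \<Rightarrow> 'n pt \<Rightarrow> 'n ctv" where
  "ham_vf f p = (THE V. \<forall>W. omega V W = cdiff f p W)"

text \<open>Lie derivative of a vector field: L_X Y = [X, Y].\<close>
definition lie :: "('n::finite pt \<Rightarrow> 'n ctv) \<Rightarrow> ('n pt \<Rightarrow> 'n ctv) \<Rightarrow> 'n pt \<Rightarrow> 'n ctv" where
  "lie X Y p = cdiffV Y p (X p) - cdiffV X p (Y p)"

definition lift :: "(real^'n::finite \<Rightarrow> real) \<Rightarrow> 'n pt \<Rightarrow> complex" where
  "lift f p = complex_of_real (f (fst p))"

definition zc :: "(real^'n::finite \<Rightarrow> real) \<Rightarrow> 'n \<Rightarrow> 'n pt \<Rightarrow> complex" where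
  "zc g j p = complex_of_real (pd g j (fst p)) + \<i> * complex_of_real (snd p $ j)"

definition dzbar :: "(real^'n::finite \<Rightarrow> real) \<Rightarrow> 'n \<Rightarrow> 'n pt \<Rightarrow> 'n ctv" where
  "dzbar g j p = (THE w. \<forall>k. cdiff (zc g k) p w = 0 \<and>
                         cdiff (\<lambda>q. cnj (zc g k q)) p w = (if k = j then 1 else 0))"

definition cspan_fam :: "('n::finite \<Rightarrow> 'm::finite ctv) \<Rightarrow> 'm ctv set" where
  "cspan_fam v = {\<Sum>j\<in>UNIV. cscale (c j) (v j) | c. True}"

text \<open>Fibre at p of the Kaehler polarization P_g = T^{0,1}: span of the d/d(zbar_j).\<close>
definition polarization :: "(real^'n::finite \<Rightarrow> real) \<Rightarrow> 'n pt \<Rightarrow> 'n ctv set" where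
  "polarization g p = cspan_fam (\<lambda>j. dzbar g j p)"

text \<open>An n-form is a map p, (v_1..v_n) |-> complex.  dZ = dz_1 /\ ... /\ dz_n.\<close>
definition dZ :: "(real^'n::finite \<Rightarrow> real) \<Rightarrow> 'n pt \<Rightarrow> ('n \<Rightarrow> 'n ctv) \<Rightarrow> complex" where
  "dZ g p v = det (\<chi> k l. cdiff (zc g k) p (v l))"

definition lieF :: "('n::finite pt \<Rightarrow> 'n ctv) \<Rightarrow> ('n pt \<Rightarrow> ('n \<Rightarrow> 'n ctv) \<Rightarrow> complex)
                     \<Rightarrow> 'n pt \<Rightarrow> ('n \<Rightarrow> 'n ctv) \<Rightarrow> complex" where
  "lieF X F p v = cdiff (\<lambda>q. F q v) p (X p) + (\<Sum>l\<in>UNIV. F p (v(l := cdiffV X p (v l))))"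

end

theory Submission
  imports Defs
begin

lemma fd_local:
  assumes "open S" "x \<in> S" "\<And>y. y \<in> S \<Longrightarrow> f y = g y"
  shows "frechet_derivative f (at x) = frechet_derivative g (at x)"
proof -
  have "\<And>D. (f has_derivative D) (at x) = (g has_derivative D) (at x)"
  proof
    fix D assume "(f has_derivative D) (at x)"
    then show "(g has_derivative D) (at x)"
      using has_derivative_transform_within_open[of f D x UNIV S g] assms by auto
  next
    fix D assume "(g has_derivative D) (at x)"
    then show "(f has_derivative D) (at x)"
      using has_derivative_transform_within_open[of g D x UNIV S f] assms by auto
  qed
  then show ?thesis unfolding frechet_derivative_def by simp
qed

lemma diff_local:
  assumes "open S" "x \<in> S" "\<And>y. y \<in> S \<Longrightarrow> f y = g y" "f differentiable (at x)"
  shows "g differentiable (at x)"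
  using assms has_derivative_transform_within_open[of f _ x UNIV S g]
  unfolding differentiable_def by auto

lemma fd_apply:
  assumes "(f has_derivative D) (at x)"
  shows "frechet_derivative f (at x) u = D u"
  using frechet_derivative_at[OF assms] by simp

lemma fd_expand:
  fixes f :: "real^'n::finite \<Rightarrow> real"
  assumes "f differentiable (at x)"
  shows "frechet_derivative f (at x) u = (\<Sum>i\<in>UNIV. u$i * pd f i x)"
proof -
  have lin: "linear (frechet_derivative f (at x))" using linear_frechet_derivative[OF assms] .
  have "u = (\<Sum>i\<in>UNIV. (u$i) *\<^sub>R axis i 1)"
    using basis_expansion[of u] by (simp add: scalar_mult_eq_scaleR)
  then have "frechet_derivative f (at x) u = frechet_derivative f (at x) (\<Sum>i\<in>UNIV. (u$i) *\<^sub>R axis i 1)"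
    by simp
  also have "\<dots> = (\<Sum>i\<in>UNIV. u$i * frechet_derivative f (at x) (axis i 1))"
    using lin by (simp add: linear_sum linear_scale)
  finally show ?thesis by (simp add: pd_def)
qed

lemma bounded_linear_axis: "bounded_linear (\<lambda>y::'a::euclidean_space. axis i y)"
proof -
  have "linear (\<lambda>y::'a. axis i y)"
    by (rule linearI) (auto simp: vec_eq_iff axis_def)
  then show ?thesis by (simp add: linear_conv_bounded_linear)
qed

lemma vec_lambda_axis_sum: "(\<chi> i. f i) = (\<Sum>i\<in>UNIV. axis i (f i))"
  by (simp add: vec_eq_iff axis_def)

lemma has_derivative_vec_lambda_fin:
  fixes f :: "'i::finite \<Rightarrow> 'a::real_normed_vector \<Rightarrow> 'b::euclidean_space"
  assumes "\<And>i. (f i has_derivative f' i) F"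
  shows "((\<lambda>x. \<chi> i. f i x) has_derivative (\<lambda>h. \<chi> i. f' i h)) F"
proof -
  have "((\<lambda>x. \<Sum>i\<in>UNIV. axis i (f i x)) has_derivative (\<lambda>h. \<Sum>i\<in>UNIV. axis i (f' i h))) F"
    by (intro has_derivative_sum bounded_linear.has_derivative[OF bounded_linear_axis] assms)
  then show ?thesis by (simp add: vec_lambda_axis_sum[symmetric])
qed

definition C3 :: "(real^'n::finite) set \<Rightarrow> (real^'n \<Rightarrow> real) \<Rightarrow> bool" where
  "C3 S f \<longleftrightarrow> open S \<and> (\<forall>x\<in>S. f differentiable (at x) \<and> (\<forall>i. pd f i differentiable (at x))
      \<and> (\<forall>i j. pd (pd f i) j differentiable (at x)))"

lemma pd_local:
  assumes "open S" "x \<in> S" "\<And>y. y \<in> S \<Longrightarrow> f y = g y"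
  shows "pd f i x = pd g i x"
  unfolding pd_def using fd_local[OF assms] by simp

lemma pd_add:
  assumes "f differentiable (at x)" "g differentiable (at x)"
  shows "pd (\<lambda>y. f y + g y) i x = pd f i x + pd g i x"
proof -
  have "((\<lambda>y. f y + g y) has_derivative (\<lambda>h. frechet_derivative f (at x) h + frechet_derivative g (at x) h)) (at x)"
    using assms by (intro has_derivative_add) (auto simp: frechet_derivative_works)
  then show ?thesis unfolding pd_def by (simp add: fd_apply)
qed

lemma pd_cmul:
  assumes "f differentiable (at x)"
  shows "pd (\<lambda>y. c * f y) i x = c * pd f i x"
proof -
  have "((\<lambda>y. c * f y) has_derivative (\<lambda>h. c * frechet_derivative f (at x) h)) (at x)"
    using assms by (intro has_derivative_mult_right) (auto simp: frechet_derivative_works)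
  then show ?thesis unfolding pd_def by (simp add: fd_apply)
qed

lemma C3_local:
  assumes "C3 S f" "\<And>y. y \<in> S \<Longrightarrow> g y = f y"
  shows "C3 S g"
proof -
  have S: "open S" using assms(1) by (simp add: C3_def)
  have e1: "pd g i y = pd f i y" if "y \<in> S" for i y
    using pd_local[OF S that, of g f] assms(2) by auto
  have e2: "pd (pd g i) j y = pd (pd f i) j y" if "y \<in> S" for i j y
    using pd_local[OF S that, of "pd g i" "pd f i"] e1 by auto
  show ?thesis unfolding C3_def
  proof (intro conjI S ballI allI)
    fix x i j assume x: "x \<in> S"
    show "g differentiable (at x)"
      using diff_local[OF S x, of f g] assms x by (auto simp: C3_def)
    show "pd g i differentiable (at x)"
      using diff_local[OF S x, of "pd f i" "pd g i"] assms x e1 by (auto simp: C3_def)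
    show "pd (pd g i) j differentiable (at x)"
      using diff_local[OF S x, of "pd (pd f i) j" "pd (pd g i) j"] assms x e2 by (auto simp: C3_def)
  qed
qed

lemma C3_add:
  assumes "C3 S f" "C3 S g"
  shows "C3 S (\<lambda>y. f y + g y)"
proof -
  have S: "open S" using assms(1) by (simp add: C3_def)
  have e1: "pd (\<lambda>y. f y + g y) i y = pd f i y + pd g i y" if "y \<in> S" for i y
    using assms that by (intro pd_add) (auto simp: C3_def)
  have e2: "pd (pd (\<lambda>y. f y + g y) i) j y = pd (pd f i) j y + pd (pd g i) j y" if "y \<in> S" for i j y
  proof -
    have "pd (pd (\<lambda>y. f y + g y) i) j y = pd (\<lambda>y. pd f i y + pd g i y) j y"
      using pd_local[OF S that, of "pd (\<lambda>y. f y + g y) i"] e1 by auto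
    also have "\<dots> = pd (pd f i) j y + pd (pd g i) j y"
      using assms that by (intro pd_add) (auto simp: C3_def)
    finally show ?thesis .
  qed
  show ?thesis unfolding C3_def
  proof (intro conjI S ballI allI)
    fix x i j assume x: "x \<in> S"
    show "(\<lambda>y. f y + g y) differentiable (at x)"
      using assms x by (auto simp: C3_def)
    show "pd (\<lambda>y. f y + g y) i differentiable (at x)"
      using diff_local[OF S x, of "\<lambda>y. pd f i y + pd g i y"] assms x e1 by (auto simp: C3_def)
    show "pd (pd (\<lambda>y. f y + g y) i) j differentiable (at x)"
      using diff_local[OF S x, of "\<lambda>y. pd (pd f i) j y + pd (pd g i) j y"] assms x e2 by (auto simp: C3_def)
  qed
qed

lemma C3_cmul:
  assumes "C3 S f"
  shows "C3 S (\<lambda>y. c * f y)"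
proof -
  have S: "open S" using assms(1) by (simp add: C3_def)
  have e1: "pd (\<lambda>y. c * f y) i y = c * pd f i y" if "y \<in> S" for i y
    using assms that by (intro pd_cmul) (auto simp: C3_def)
  have e2: "pd (pd (\<lambda>y. c * f y) i) j y = c * pd (pd f i) j y" if "y \<in> S" for i j y
  proof -
    have "pd (pd (\<lambda>y. c * f y) i) j y = pd (\<lambda>y. c * pd f i y) j y"
      using pd_local[OF S that, of "pd (\<lambda>y. c * f y) i"] e1 by auto
    also have "\<dots> = c * pd (pd f i) j y"
      using assms that by (intro pd_cmul) (auto simp: C3_def)
    finally show ?thesis .
  qed
  show ?thesis unfolding C3_def
  proof (intro conjI S ballI allI)
    fix x i j assume x: "x \<in> S"
    show "(\<lambda>y. c * f y) differentiable (at x)"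
      using assms x by (auto simp: C3_def)
    show "pd (\<lambda>y. c * f y) i differentiable (at x)"
      using diff_local[OF S x, of "\<lambda>y. c * pd f i y"] assms x e1 by (auto simp: C3_def)
    show "pd (pd (\<lambda>y. c * f y) i) j differentiable (at x)"
      using diff_local[OF S x, of "\<lambda>y. c * pd (pd f i) j y"] assms x e2 by (auto simp: C3_def)
  qed
qed

lemma C3_mono: "C3 S f \<Longrightarrow> open T \<Longrightarrow> T \<subseteq> S \<Longrightarrow> C3 T f"
  unfolding C3_def by auto

lemma smooth_C3:
  assumes "smooth_on U h"
  shows "C3 U h"
proof -
  have U: "open U" using assms by (simp add: smooth_on_def)
  have d: "dder h vs differentiable (at x)" if "x \<in> U" for vs x
    using assms U that by (auto simp: smooth_on_def differentiable_on_eq_differentiable_at)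
  have p1: "pd h i = dder h [axis i 1]" for i by (rule ext) (simp add: pd_def)
  have p2: "pd (pd h i) j = dder h [axis j 1, axis i 1]" for i j
    by (rule ext) (simp add: pd_def p1)
  show ?thesis unfolding C3_def
    using U d[of _ "[]"] d p1 p2 by (metis dder.simps(1))
qed

lemma smooth_upto_C3:
  assumes "smooth_upto P f"
  shows "C3 (interior P) f"
proof -
  obtain U h where U: "P \<subseteq> U" "smooth_on U h" "\<forall>x\<in>P. h x = f x"
    using assms by (auto simp: smooth_upto_def)
  have h: "C3 (interior P) h"
    using C3_mono[OF smooth_C3[OF U(2)]] U(1) interior_subset by blast
  show ?thesis
    by (rule C3_local[OF h]) (use U(3) interior_subset in force)
qed

lemma line_deriv:
  fixes g :: "real^'n::finite \<Rightarrow> real"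
  assumes "g differentiable (at (y0 + u *\<^sub>R v))"
  shows "((\<lambda>u. g (y0 + u *\<^sub>R v)) has_real_derivative frechet_derivative g (at (y0 + u *\<^sub>R v)) v) (at u)"
proof -
  let ?D = "frechet_derivative g (at (y0 + u *\<^sub>R v))"
  have l: "((\<lambda>u. y0 + u *\<^sub>R v) has_derivative (\<lambda>h. h *\<^sub>R v)) (at u)"
    by (auto intro!: derivative_eq_intros)
  have "((\<lambda>u. g (y0 + u *\<^sub>R v)) has_derivative (\<lambda>h. ?D (h *\<^sub>R v))) (at u)"
    using has_derivative_compose[OF l] assms frechet_derivative_works by blast
  moreover have "(\<lambda>h. ?D (h *\<^sub>R v)) = (\<lambda>h. ?D v * h)"
    using linear_frechet_derivative[OF assms] by (auto simp: linear_scale)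
  ultimately show ?thesis by (simp add: has_field_derivative_def)
qed

lemma norm_two_axis:
  fixes u w :: real
  assumes "0 \<le> u" "u \<le> t" "0 \<le> w" "w \<le> t"
  shows "norm (u *\<^sub>R (axis i 1 :: real^'n::finite) + w *\<^sub>R axis j 1) \<le> 2 * t"
proof -
  have "norm (u *\<^sub>R (axis i 1 :: real^'n) + w *\<^sub>R axis j 1) \<le> norm (u *\<^sub>R (axis i 1 :: real^'n)) + norm (w *\<^sub>R (axis j 1 :: real^'n))"
    by (rule norm_triangle_ineq)
  also have "\<dots> = u + w" using assms by simp
  finally show ?thesis using assms by simp
qed

lemma mixed_mvt:
  fixes f :: "real^'n::finite \<Rightarrow> real"
  assumes C: "C3 S f" and B: "ball x d \<subseteq> S" and t: "0 < t" "2 * t < d"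
  shows "\<exists>y\<in>ball x d. f (x + t *\<^sub>R axis i 1 + t *\<^sub>R axis j 1) - f (x + t *\<^sub>R axis i 1)
           - f (x + t *\<^sub>R axis j 1) + f x = t^2 * pd (pd f i) j y"
proof -
  define ei :: "real^'n" where "ei = axis i 1"
  define ej :: "real^'n" where "ej = axis j 1"
  have inb: "x + u *\<^sub>R ei + w *\<^sub>R ej \<in> S" if "0 \<le> u" "u \<le> t" "0 \<le> w" "w \<le> t" for u w
  proof -
    have "norm (u *\<^sub>R ei + w *\<^sub>R ej) \<le> 2 * t" using norm_two_axis[OF that] by (simp add: ei_def ej_def)
    moreover have "dist x (x + (u *\<^sub>R ei + w *\<^sub>R ej)) = norm (u *\<^sub>R ei + w *\<^sub>R ej)"
      by (metis add_diff_cancel_left' dist_commute dist_norm)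
    ultimately have "x + u *\<^sub>R ei + w *\<^sub>R ej \<in> ball x d" using t by (simp add: add.assoc)
    then show ?thesis using B by auto
  qed
  have Cd: "f differentiable (at y)" "pd f i differentiable (at y)" "pd (pd f i) j differentiable (at y)"
    if "y \<in> S" for y using C that by (auto simp: C3_def)
  define \<phi> where "\<phi> u = f ((x + t *\<^sub>R ej) + u *\<^sub>R ei) - f (x + u *\<^sub>R ei)" for u
  define \<phi>' where "\<phi>' u = pd f i ((x + t *\<^sub>R ej) + u *\<^sub>R ei) - pd f i (x + u *\<^sub>R ei)" for u
  have "\<exists>z>0. z < t \<and> \<phi> t - \<phi> 0 = (t - 0) * \<phi>' z"
  proof (rule MVT2)
    show "0 < t" by fact
    fix u assume u: "0 \<le> u" "u \<le> t"
    have s1: "(x + t *\<^sub>R ej) + u *\<^sub>R ei \<in> S" using inb[OF u, of t] t by (simp add: add_ac)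
    have s2: "x + u *\<^sub>R ei \<in> S" using inb[OF u, of 0] t by simp
    show "(\<phi> has_real_derivative \<phi>' u) (at u)"
      unfolding \<phi>_def \<phi>'_def pd_def ei_def[symmetric]
      by (intro DERIV_diff line_deriv Cd s1 s2)
  qed
  then obtain \<xi> where xi: "0 < \<xi>" "\<xi> < t" "\<phi> t - \<phi> 0 = t * \<phi>' \<xi>" by auto
  define \<rho> where "\<rho> w = pd f i ((x + \<xi> *\<^sub>R ei) + w *\<^sub>R ej)" for w
  have "\<exists>z>0. z < t \<and> \<rho> t - \<rho> 0 = (t - 0) * pd (pd f i) j ((x + \<xi> *\<^sub>R ei) + z *\<^sub>R ej)"
  proof (rule MVT2)
    show "0 < t" by fact
    fix w assume w: "0 \<le> w" "w \<le> t"
    have s1: "(x + \<xi> *\<^sub>R ei) + w *\<^sub>R ej \<in> S" using inb[of \<xi> w] xi w by simp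
    show "(\<rho> has_real_derivative pd (pd f i) j ((x + \<xi> *\<^sub>R ei) + w *\<^sub>R ej)) (at w)"
      unfolding \<rho>_def pd_def[of "pd f i"] ej_def[symmetric]
      by (intro line_deriv Cd s1)
  qed
  then obtain \<eta> where eta: "0 < \<eta>" "\<eta> < t"
    "\<rho> t - \<rho> 0 = t * pd (pd f i) j ((x + \<xi> *\<^sub>R ei) + \<eta> *\<^sub>R ej)" by auto
  define y where "y = (x + \<xi> *\<^sub>R ei) + \<eta> *\<^sub>R ej"
  have yb: "y \<in> ball x d"
  proof -
    have "norm (\<xi> *\<^sub>R ei + \<eta> *\<^sub>R ej) \<le> 2 * t"
      using norm_two_axis[of \<xi> t \<eta> i j] xi eta by (simp add: ei_def ej_def)
    moreover have "dist x (x + (\<xi> *\<^sub>R ei + \<eta> *\<^sub>R ej)) = norm (\<xi> *\<^sub>R ei + \<eta> *\<^sub>R ej)"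
      by (metis add_diff_cancel_left' dist_commute dist_norm)
    ultimately show ?thesis using t by (simp add: y_def add.assoc)
  qed
  have "\<phi>' \<xi> = \<rho> t - \<rho> 0" by (simp add: \<phi>'_def \<rho>_def add_ac)
  then have "\<phi> t - \<phi> 0 = t * (t * pd (pd f i) j y)" using xi(3) eta(3) by (simp add: y_def)
  moreover have "\<phi> t - \<phi> 0 = f (x + t *\<^sub>R axis i 1 + t *\<^sub>R axis j 1) - f (x + t *\<^sub>R axis i 1)
           - f (x + t *\<^sub>R axis j 1) + f x"
    by (simp add: \<phi>_def ei_def ej_def add_ac)
  ultimately show ?thesis using yb by (intro bexI[of _ y]) (simp_all add: power2_eq_square)
qed

lemma clairaut:
  fixes f :: "real^'n::finite \<Rightarrow> real"
  assumes C: "C3 S f" and x: "x \<in> S"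
  shows "pd (pd f i) j x = pd (pd f j) i x"
proof (rule ccontr)
  let ?A = "pd (pd f i) j" and ?B = "pd (pd f j) i"
  assume ne: "?A x \<noteq> ?B x"
  define e where "e = \<bar>?A x - ?B x\<bar> / 2"
  have e: "e > 0" using ne by (simp add: e_def)
  have S: "open S" using C by (simp add: C3_def)
  have cA: "isCont ?A x" and cB: "isCont ?B x"
    using C x by (auto simp: C3_def intro: differentiable_imp_continuous_within)
  obtain d1 where d1: "d1 > 0" "\<forall>y. dist y x < d1 \<longrightarrow> dist (?A y) (?A x) < e"
    using cA e by (auto simp: continuous_at_eps_delta)
  obtain d2 where d2: "d2 > 0" "\<forall>y. dist y x < d2 \<longrightarrow> dist (?B y) (?B x) < e"
    using cB e by (auto simp: continuous_at_eps_delta)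
  obtain d3 where d3: "d3 > 0" "ball x d3 \<subseteq> S" using S x open_contains_ball by blast
  define d where "d = min d1 (min d2 d3)"
  have d: "d > 0" "ball x d \<subseteq> S" using d1 d2 d3 by (auto simp: d_def)
  define t where "t = d / 3"
  have t: "0 < t" "2 * t < d" using d by (auto simp: t_def)
  obtain y where y: "y \<in> ball x d" "f (x + t *\<^sub>R axis i 1 + t *\<^sub>R axis j 1) - f (x + t *\<^sub>R axis i 1)
           - f (x + t *\<^sub>R axis j 1) + f x = t^2 * ?A y"
    using mixed_mvt[OF C d(2) t, of i j] by auto
  obtain y' where y': "y' \<in> ball x d" "f (x + t *\<^sub>R axis j 1 + t *\<^sub>R axis i 1) - f (x + t *\<^sub>R axis j 1)
           - f (x + t *\<^sub>R axis i 1) + f x = t^2 * ?B y'"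
    using mixed_mvt[OF C d(2) t, of j i] by auto
  have "t^2 * ?A y = t^2 * ?B y'" using y(2) y'(2) by (simp add: algebra_simps)
  then have eq: "?A y = ?B y'" using t by simp
  have "dist (?A y) (?A x) < e" using d1 y(1) by (auto simp: d_def dist_commute)
  moreover have "dist (?B y') (?B x) < e" using d2 y'(1) by (auto simp: d_def dist_commute)
  ultimately have "\<bar>?A x - ?B x\<bar> < 2 * e" using eq by (simp add: dist_real_def)
  then show False by (simp add: e_def)
qed

definition nvec :: "('r \<Rightarrow> int^'n::finite) \<Rightarrow> 'r \<Rightarrow> real^'n" where
  "nvec nu j = (\<chi> i. real_of_int (nu j $ i))"

lemma ell_inner: "ell nu lam j x = nvec nu j \<bullet> x + lam j"
  by (simp add: ell_def nvec_def inner_vec_def mult.commute)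

lemma nvec_nz:
  assumes "delzant nu lam"
  shows "nvec nu j \<noteq> 0"
proof
  assume z: "nvec nu j = 0"
  then have "\<forall>i. nu j $ i = 0" by (simp add: nvec_def vec_eq_iff)
  then have a: "\<forall>i. (2::int) dvd nu j $ i" by simp
  have "\<forall>j. \<forall>d::int. (\<forall>i. d dvd nu j $ i) \<longrightarrow> \<bar>d\<bar> = 1" using assms by (simp add: delzant_def)
  then have "\<bar>2::int\<bar> = 1" using a by blast
  then show False by simp
qed

lemma ell_pos:
  assumes D: "delzant nu lam" and x: "x \<in> interior (polytope nu lam)"
  shows "ell nu lam j x > 0"
proof (rule ccontr)
  assume "\<not> ell nu lam j x > 0"
  moreover have "ell nu lam j x \<ge> 0" using x interior_subset by (auto simp: polytope_def)
  ultimately have z: "ell nu lam j x = 0" by simp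
  obtain e where e: "e > 0" "ball x e \<subseteq> polytope nu lam"
    using x by (meson mem_interior)
  let ?n = "nvec nu j"
  have nn: "norm ?n > 0" using nvec_nz[OF D] by simp
  define \<delta> where "\<delta> = e / (2 * norm ?n)"
  have dpos: "\<delta> > 0" using e nn by (simp add: \<delta>_def)
  define y where "y = x - \<delta> *\<^sub>R ?n"
  have "dist x y = \<delta> * norm ?n" using dpos by (simp add: y_def dist_norm)
  also have "\<dots> = e / 2" using nn by (simp add: \<delta>_def)
  finally have "y \<in> ball x e" using e by simp
  then have "ell nu lam j y \<ge> 0" using e by (auto simp: polytope_def)
  moreover have "ell nu lam j y = ell nu lam j x - \<delta> * (?n \<bullet> ?n)"
    by (simp add: ell_inner y_def inner_diff_right)
  moreover have "?n \<bullet> ?n > 0" using nvec_nz[OF D] by simp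
  then have "\<delta> * (?n \<bullet> ?n) > 0" using dpos by simp
  ultimately show False using z by linarith
qed

definition P1 :: "('r::finite \<Rightarrow> int^'n::finite) \<Rightarrow> ('r \<Rightarrow> real) \<Rightarrow> 'n \<Rightarrow> real^'n \<Rightarrow> real" where
  "P1 nu lam i x = 1/2 * (\<Sum>j\<in>UNIV. nvec nu j $ i * (ln (ell nu lam j x) + 1))"

definition P2 :: "('r::finite \<Rightarrow> int^'n::finite) \<Rightarrow> ('r \<Rightarrow> real) \<Rightarrow> 'n \<Rightarrow> 'n \<Rightarrow> real^'n \<Rightarrow> real" where
  "P2 nu lam i k x = 1/2 * (\<Sum>j\<in>UNIV. nvec nu j $ i * nvec nu j $ k / ell nu lam j x)"

lemma ell_deriv: "(ell nu lam j has_derivative (\<lambda>h. nvec nu j \<bullet> h)) (at x)"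
  unfolding ell_inner[abs_def] by (auto intro!: derivative_eq_intros)

lemma ln_ell_deriv:
  assumes "ell nu lam j x > 0"
  shows "((\<lambda>x. ln (ell nu lam j x)) has_derivative (\<lambda>h. (nvec nu j \<bullet> h) * inverse (ell nu lam j x))) (at x)"
  using has_derivative_ln[OF assms ell_deriv] .

lemma gP_deriv:
  assumes "\<And>j. ell nu lam j x > 0"
  shows "(gP nu lam has_derivative (\<lambda>h. 1/2 * (\<Sum>j\<in>UNIV. (nvec nu j \<bullet> h) * (ln (ell nu lam j x) + 1)))) (at x)"
proof -
  have dj: "((\<lambda>x. ell nu lam j x * ln (ell nu lam j x)) has_derivative (\<lambda>h. (nvec nu j \<bullet> h) * (ln (ell nu lam j x) + 1))) (at x)" for j
  proof (rule has_derivative_eq_rhs)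
    show "((\<lambda>x. ell nu lam j x * ln (ell nu lam j x)) has_derivative
      (\<lambda>h. ell nu lam j x * ((nvec nu j \<bullet> h) * inverse (ell nu lam j x)) + (nvec nu j \<bullet> h) * ln (ell nu lam j x))) (at x)"
      by (rule has_derivative_mult[OF ell_deriv ln_ell_deriv[OF assms]])
    have "ell nu lam j x \<noteq> 0" using assms[of j] by simp
    then show "(\<lambda>h. ell nu lam j x * ((nvec nu j \<bullet> h) * inverse (ell nu lam j x)) + (nvec nu j \<bullet> h) * ln (ell nu lam j x))
      = (\<lambda>h. (nvec nu j \<bullet> h) * (ln (ell nu lam j x) + 1))" by (simp add: field_simps)
  qed
  have "((\<lambda>x. 1/2 * (\<Sum>j\<in>UNIV. ell nu lam j x * ln (ell nu lam j x))) has_derivative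
      (\<lambda>h. 1/2 * (\<Sum>j\<in>UNIV. (nvec nu j \<bullet> h) * (ln (ell nu lam j x) + 1)))) (at x)"
    by (rule has_derivative_mult_right[OF has_derivative_sum]) (rule dj)
  then show ?thesis by (simp only: gP_def[abs_def])
qed

lemma P1_deriv:
  assumes "\<And>j. ell nu lam j x > 0"
  shows "(P1 nu lam i has_derivative (\<lambda>h. 1/2 * (\<Sum>j\<in>UNIV. nvec nu j $ i * ((nvec nu j \<bullet> h) / ell nu lam j x)))) (at x)"
proof -
  have dj: "((\<lambda>x. nvec nu j $ i * (ln (ell nu lam j x) + 1)) has_derivative
      (\<lambda>h. nvec nu j $ i * ((nvec nu j \<bullet> h) * inverse (ell nu lam j x) + 0))) (at x)" for j
    by (rule has_derivative_mult_right[OF has_derivative_add[OF ln_ell_deriv[OF assms] has_derivative_const]])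
  have "((\<lambda>x. 1/2 * (\<Sum>j\<in>UNIV. nvec nu j $ i * (ln (ell nu lam j x) + 1))) has_derivative
      (\<lambda>h. 1/2 * (\<Sum>j\<in>UNIV. nvec nu j $ i * ((nvec nu j \<bullet> h) * inverse (ell nu lam j x) + 0)))) (at x)"
    by (rule has_derivative_mult_right[OF has_derivative_sum]) (rule dj)
  then show ?thesis by (simp only: P1_def[abs_def] divide_inverse add_0_right)
qed

lemma P2_diff:
  assumes "\<And>j. ell nu lam j x > 0"
  shows "P2 nu lam i k differentiable (at x)"
proof -
  have "(\<lambda>x. nvec nu j $ i * nvec nu j $ k / ell nu lam j x) differentiable (at x)" for j
  proof (rule differentiable_divide)
    show "(\<lambda>x. nvec nu j $ i * nvec nu j $ k) differentiable (at x)" by simp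
    show "ell nu lam j differentiable (at x)" using ell_deriv by (rule differentiableI)
    show "ell nu lam j x \<noteq> 0" using assms[of j] by simp
  qed
  then have "(\<lambda>x. \<Sum>j\<in>UNIV. nvec nu j $ i * nvec nu j $ k / ell nu lam j x) differentiable (at x)"
    by (intro differentiable_sum) auto
  then have "(\<lambda>x. 1/2 * (\<Sum>j\<in>UNIV. nvec nu j $ i * nvec nu j $ k / ell nu lam j x)) differentiable (at x)"
    by (intro differentiable_mult) auto
  then show ?thesis by (simp only: P2_def[abs_def])
qed

lemma gP_C3:
  assumes D: "delzant nu lam"
  shows "C3 (interior (polytope nu lam)) (gP nu lam)"
proof -
  let ?S = "interior (polytope nu lam)"
  have S: "open ?S" by simp
  have pos: "\<And>j. ell nu lam j x > 0" if "x \<in> ?S" for x using ell_pos[OF D that] .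
  have e1: "pd (gP nu lam) i x = P1 nu lam i x" if "x \<in> ?S" for i x
    using fd_apply[OF gP_deriv[OF pos[OF that]]]
    by (simp add: pd_def P1_def inner_axis)
  have e2: "pd (pd (gP nu lam) i) k x = P2 nu lam i k x" if "x \<in> ?S" for i k x
  proof -
    have "pd (pd (gP nu lam) i) k x = pd (P1 nu lam i) k x"
      using pd_local[OF S that, of "pd (gP nu lam) i" "P1 nu lam i"] e1 by auto
    also have "\<dots> = P2 nu lam i k x"
      using fd_apply[OF P1_deriv[OF pos[OF that]]]
      by (simp add: pd_def P2_def inner_axis)
    finally show ?thesis .
  qed
  show ?thesis unfolding C3_def
  proof (intro conjI S ballI allI)
    fix x i j assume x: "x \<in> ?S"
    show "gP nu lam differentiable (at x)" using gP_deriv[OF pos[OF x]] by (rule differentiableI)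
    show "pd (gP nu lam) i differentiable (at x)"
      using diff_local[OF S x, of "P1 nu lam i" "pd (gP nu lam) i"] e1 x
        differentiableI[OF P1_deriv[OF pos[OF x]]] by auto
    show "pd (pd (gP nu lam) i) j differentiable (at x)"
      using diff_local[OF S x, of "P2 nu lam i j" "pd (pd (gP nu lam) i) j"] e2 x
        P2_diff[OF pos[OF x]] by auto
  qed
qed

lemma hd_fst:
  assumes "(\<phi> has_derivative D) (at (fst p))"
  shows "((\<lambda>q. \<phi> (fst q)) has_derivative (\<lambda>u. D (fst u))) (at p)"
proof -
  have "((\<lambda>q. fst q) has_derivative (\<lambda>h. fst h)) (at p)"
    using has_derivative_fst[OF has_derivative_ident] .
  from has_derivative_compose[OF this] assms show ?thesis by blast
qed

lemma cdiff_hd: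
  assumes "(f has_derivative D) (at p)"
  shows "cdiff f p w = D (cre w) + \<i> * D (cim w)"
  using fd_apply[OF assms] by (simp add: cdiff_def)

lemma cdiffV_hd:
  assumes "(f has_derivative D) (at p)"
  shows "cdiffV f p w = D (cre w) + cscale \<i> (D (cim w))"
  using fd_apply[OF assms] by (simp add: cdiffV_def)

lemma re_im_sum:
  "complex_of_real (\<Sum>i\<in>UNIV. Re (a$i) * c i) + \<i> * complex_of_real (\<Sum>i\<in>UNIV. Im (a$i) * c i)
   = (\<Sum>i\<in>UNIV. a$i * complex_of_real (c i))"
  by (simp add: complex_eq_iff Re_sum Im_sum)

lemma re_im_sum2:
  "(\<Sum>i\<in>UNIV. complex_of_real (Re (a$i)) * complex_of_real (c i)) + \<i> * (\<Sum>i\<in>UNIV. complex_of_real (Im (a$i)) * complex_of_real (c i))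
   = (\<Sum>i\<in>UNIV. a$i * complex_of_real (c i))"
  by (simp add: complex_eq_iff Re_sum Im_sum)

lemma cdiff_liftfun:
  fixes h :: "real^'n::finite \<Rightarrow> real"
  assumes "h differentiable (at (fst p))"
  shows "cdiff (\<lambda>q. complex_of_real (h (fst q))) p w = (\<Sum>i\<in>UNIV. fst w $ i * complex_of_real (pd h i (fst p)))"
proof -
  let ?D = "frechet_derivative h (at (fst p))"
  have "((\<lambda>q. complex_of_real (h (fst q))) has_derivative (\<lambda>u. complex_of_real (?D (fst u)))) (at p)"
    using hd_fst[OF assms[unfolded frechet_derivative_works]]
    by (rule has_derivative_of_real)
  then have "cdiff (\<lambda>q. complex_of_real (h (fst q))) p w = complex_of_real (?D (fst (cre w))) + \<i> * complex_of_real (?D (fst (cim w)))"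
    by (rule cdiff_hd)
  also have "\<dots> = (\<Sum>i\<in>UNIV. fst w $ i * complex_of_real (pd h i (fst p)))"
    using fd_expand[OF assms] by (simp add: cre_def cim_def cvre_def cvim_def re_im_sum re_im_sum2)
  finally show ?thesis .
qed

lemma hd_snd_nth:
  "((\<lambda>q::'n::finite pt. complex_of_real (snd q $ j)) has_derivative (\<lambda>u. complex_of_real (snd u $ j))) (at p)"
  by (rule has_derivative_of_real[OF bounded_linear.has_derivative[OF bounded_linear_vec_nth has_derivative_snd[OF has_derivative_ident]]])

lemma cdiff_zc:
  fixes g :: "real^'n::finite \<Rightarrow> real"
  assumes "pd g j differentiable (at (fst p))"
  shows "cdiff (zc g j) p w = (\<Sum>i\<in>UNIV. fst w $ i * complex_of_real (pd (pd g j) i (fst p))) + \<i> * snd w $ j"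
proof -
  let ?D = "frechet_derivative (pd g j) (at (fst p))"
  have h1: "((\<lambda>q. complex_of_real (pd g j (fst q))) has_derivative (\<lambda>u. complex_of_real (?D (fst u)))) (at p)"
    using hd_fst[OF assms[unfolded frechet_derivative_works]] by (rule has_derivative_of_real)
  have "(zc g j has_derivative (\<lambda>u. complex_of_real (?D (fst u)) + \<i> * complex_of_real (snd u $ j))) (at p)"
    unfolding zc_def[abs_def] by (intro has_derivative_add h1 has_derivative_mult_right hd_snd_nth)
  then have "cdiff (zc g j) p w = (complex_of_real (?D (fst (cre w))) + \<i> * complex_of_real (snd (cre w) $ j))
       + \<i> * (complex_of_real (?D (fst (cim w))) + \<i> * complex_of_real (snd (cim w) $ j))"
    by (rule cdiff_hd)
  also have "\<dots> = (\<Sum>i\<in>UNIV. fst w $ i * complex_of_real (pd (pd g j) i (fst p))) + \<i> * snd w $ j"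
    using fd_expand[OF assms] by (simp add: cre_def cim_def cvre_def cvim_def complex_eq_iff Re_sum Im_sum)
  finally show ?thesis .
qed

lemma cdiff_zc_cnj:
  fixes g :: "real^'n::finite \<Rightarrow> real"
  assumes "pd g j differentiable (at (fst p))"
  shows "cdiff (\<lambda>q. cnj (zc g j q)) p w = (\<Sum>i\<in>UNIV. fst w $ i * complex_of_real (pd (pd g j) i (fst p))) - \<i> * snd w $ j"
proof -
  let ?D = "frechet_derivative (pd g j) (at (fst p))"
  have h1: "((\<lambda>q. complex_of_real (pd g j (fst q))) has_derivative (\<lambda>u. complex_of_real (?D (fst u)))) (at p)"
    using hd_fst[OF assms[unfolded frechet_derivative_works]] by (rule has_derivative_of_real)
  have e: "(\<lambda>q. cnj (zc g j q)) = (\<lambda>q. complex_of_real (pd g j (fst q)) - \<i> * complex_of_real (snd q $ j))"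
    by (rule ext) (simp add: zc_def)
  have "((\<lambda>q. cnj (zc g j q)) has_derivative (\<lambda>u. complex_of_real (?D (fst u)) - \<i> * complex_of_real (snd u $ j))) (at p)"
    unfolding e by (intro has_derivative_diff h1 has_derivative_mult_right hd_snd_nth)
  then have "cdiff (\<lambda>q. cnj (zc g j q)) p w = (complex_of_real (?D (fst (cre w))) - \<i> * complex_of_real (snd (cre w) $ j))
       + \<i> * (complex_of_real (?D (fst (cim w))) - \<i> * complex_of_real (snd (cim w) $ j))"
    by (rule cdiff_hd)
  also have "\<dots> = (\<Sum>i\<in>UNIV. fst w $ i * complex_of_real (pd (pd g j) i (fst p))) - \<i> * snd w $ j"
    using fd_expand[OF assms] by (simp add: cre_def cim_def cvre_def cvim_def complex_eq_iff Re_sum Im_sum)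
  finally show ?thesis .
qed

lemma sum_delta_r: fixes c :: "'b::finite \<Rightarrow> 'a::comm_ring_1" shows "(\<Sum>j\<in>UNIV. c j * (if j = i then 1 else 0)) = (c i :: 'a::comm_ring_1)"
  by (simp add: if_distrib[of "\<lambda>x. c _ * x"] sum.delta sum.delta' cong: if_cong)
lemma sum_delta_l: fixes c :: "'b::finite \<Rightarrow> 'a::comm_ring_1" shows "(\<Sum>j\<in>UNIV. (if j = i then 1 else 0) * c j) = (c i :: 'a::comm_ring_1)"
  by (simp add: if_distrib[of "\<lambda>x. x * c _"] sum.delta sum.delta' cong: if_cong)

lemma ham_vf_char:
  assumes "\<And>W. cdiff f p W = (\<Sum>i\<in>UNIV. fst W $ i * A i + snd W $ i * B i)"
  shows "ham_vf f p = ((\<chi> i. B i), (\<chi> i. - A i))"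
  unfolding ham_vf_def
proof (rule the_equality)
  show "\<forall>W. omega ((\<chi> i. B i), (\<chi> i. - A i)) W = cdiff f p W"
    by (auto simp: omega_def assms algebra_simps intro!: sum.cong)
next
  fix V assume H: "\<forall>W. omega V W = cdiff f p W"
  have s: "snd V $ i = - A i" for i
  proof -
    have "omega V (axis i 1, 0) = cdiff f p (axis i 1, 0)" using H by simp
    then have "- snd V $ i = A i" by (simp add: omega_def assms axis_def sum_negf sum_delta_l sum_delta_r)
    then show ?thesis by (metis minus_minus)
  qed
  have f: "fst V $ i = B i" for i
  proof -
    have "omega V (0, axis i 1) = cdiff f p (0, axis i 1)" using H by simp
    then show ?thesis by (simp add: omega_def assms axis_def sum_negf sum_delta_l sum_delta_r)
  qed
  show "V = ((\<chi> i. B i), (\<chi> i. - A i))" using s f by (simp add: prod_eq_iff vec_eq_iff)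
qed

lemma cdiffV_form:
  fixes h :: "'n::finite \<Rightarrow> real^'n \<Rightarrow> real" and F :: "'n pt \<Rightarrow> 'n ctv"
  assumes U: "open U" "fst p \<in> U"
    and F: "\<And>q. fst q \<in> U \<Longrightarrow> F q = (c, \<chi> i. \<beta> * complex_of_real (h i (fst q)))"
    and d: "\<And>i. h i differentiable (at (fst p))"
  shows "cdiffV F p w = (0, \<chi> i. \<beta> * (\<Sum>k\<in>UNIV. fst w $ k * complex_of_real (pd (h i) k (fst p))))"
proof -
  define G :: "'n pt \<Rightarrow> 'n ctv" where "G q = (c, \<chi> i. \<beta> * complex_of_real (h i (fst q)))" for q
  let ?D = "\<lambda>i. frechet_derivative (h i) (at (fst p))"
  have hi: "((\<lambda>q. \<beta> * complex_of_real (h i (fst q))) has_derivative (\<lambda>u. \<beta> * complex_of_real (?D i (fst u)))) (at p)" for i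
    by (rule has_derivative_mult_right[OF has_derivative_of_real[OF hd_fst]]) (use d frechet_derivative_works in blast)
  have hG: "(G has_derivative (\<lambda>u. (0, \<chi> i. \<beta> * complex_of_real (?D i (fst u))))) (at p)"
    unfolding G_def by (intro has_derivative_Pair has_derivative_const has_derivative_vec_lambda_fin hi)
  have o: "open (U \<times> (UNIV :: (real^'n) set))" using U by (simp add: open_Times)
  have pin: "p \<in> U \<times> UNIV" using U by (cases p) auto
  have "frechet_derivative F (at p) = frechet_derivative G (at p)"
    by (rule fd_local[OF o pin]) (auto simp: F G_def)
  then have "cdiffV F p w = cdiffV G p w" by (simp add: cdiffV_def)
  also have "\<dots> = (0, \<chi> i. \<beta> * complex_of_real (?D i (fst (cre w)))) + cscale \<i> (0, \<chi> i. \<beta> * complex_of_real (?D i (fst (cim w))))"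
    by (rule cdiffV_hd[OF hG])
  also have "\<dots> = (0, \<chi> i. \<beta> * (\<Sum>k\<in>UNIV. fst w $ k * complex_of_real (pd (h i) k (fst p))))"
  proof -
    have "\<beta> * complex_of_real (?D i (fst (cre w))) + \<i> * (\<beta> * complex_of_real (?D i (fst (cim w))))
        = \<beta> * (\<Sum>k\<in>UNIV. fst w $ k * complex_of_real (pd (h i) k (fst p)))" for i
    proof -
      have "complex_of_real (?D i (fst (cre w))) + \<i> * complex_of_real (?D i (fst (cim w)))
          = (\<Sum>k\<in>UNIV. fst w $ k * complex_of_real (pd (h i) k (fst p)))"
        using fd_expand[OF d[of i]] by (simp add: cre_def cim_def cvre_def cvim_def complex_eq_iff Re_sum Im_sum)
      moreover have "\<beta> * complex_of_real (?D i (fst (cre w))) + \<i> * (\<beta> * complex_of_real (?D i (fst (cim w))))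
        = \<beta> * (complex_of_real (?D i (fst (cre w))) + \<i> * complex_of_real (?D i (fst (cim w))))"
        by (simp add: algebra_simps)
      ultimately show ?thesis by simp
    qed
    then show ?thesis by (simp add: cscale_def vec_eq_iff)
  qed
  finally show ?thesis .
qed

locale toric =
  fixes S :: "(real^'n::finite) set" and g psi :: "real^'n \<Rightarrow> real"
  assumes Cg: "C3 S g" and Cpsi: "C3 S psi"
begin

abbreviation X where "X \<equiv> ham_vf (lift psi)"

lemma S_open: "open S" using Cg by (simp add: C3_def)

lemma dg: "x \<in> S \<Longrightarrow> g differentiable (at x)" "x \<in> S \<Longrightarrow> pd g i differentiable (at x)"
  "x \<in> S \<Longrightarrow> pd (pd g i) j differentiable (at x)"
  using Cg by (auto simp: C3_def)

lemma dpsi: "x \<in> S \<Longrightarrow> psi differentiable (at x)" "x \<in> S \<Longrightarrow> pd psi i differentiable (at x)"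
  "x \<in> S \<Longrightarrow> pd (pd psi i) j differentiable (at x)"
  using Cpsi by (auto simp: C3_def)

lemma X_form:
  assumes "fst q \<in> S"
  shows "X q = (0, \<chi> i. (-1) * complex_of_real (pd psi i (fst q)))"
proof -
  have "X q = ((\<chi> i. 0), (\<chi> i. - complex_of_real (pd psi i (fst q))))"
  proof (rule ham_vf_char)
    fix W :: "'n ctv"
    have "lift psi = (\<lambda>q. complex_of_real (psi (fst q)))" by (rule ext) (simp add: lift_def)
    then show "cdiff (lift psi) q W = (\<Sum>i\<in>UNIV. fst W $ i * complex_of_real (pd psi i (fst q)) + snd W $ i * 0)"
      using cdiff_liftfun[OF dpsi(1)[OF assms]] by simp
  qed
  then show ?thesis by (simp add: vec_eq_iff prod_eq_iff)
qed

lemma Y0_form: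
  assumes "fst q \<in> S"
  shows "ham_vf (zc g j) q = ((\<chi> i. if i = j then \<i> else 0), \<chi> i. (-1) * complex_of_real (pd (pd g j) i (fst q)))"
proof -
  have "ham_vf (zc g j) q = ((\<chi> i. if i = j then \<i> else 0), \<chi> i. - complex_of_real (pd (pd g j) i (fst q)))"
  proof (rule ham_vf_char)
    fix W :: "'n ctv"
    have "(\<Sum>i\<in>UNIV. snd W $ i * (if i = j then \<i> else 0)) = \<i> * snd W $ j"
      by (simp add: if_distrib[of "\<lambda>x. snd W $ _ * x"] cong: if_cong)
    then show "cdiff (zc g j) q W = (\<Sum>i\<in>UNIV. fst W $ i * complex_of_real (pd (pd g j) i (fst q))
         + snd W $ i * (if i = j then \<i> else 0))"
      using cdiff_zc[OF dg(2)[OF assms]] by (simp add: sum.distrib)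
  qed
  then show ?thesis by (simp add: vec_eq_iff prod_eq_iff)
qed

lemma cdiffV_X:
  assumes "fst p \<in> S"
  shows "cdiffV X p w = (0, \<chi> i. (-1) * (\<Sum>k\<in>UNIV. fst w $ k * complex_of_real (pd (pd psi i) k (fst p))))"
  by (rule cdiffV_form[OF S_open assms]) (use X_form dpsi(2)[OF assms] in auto)

definition Yk :: "'n \<Rightarrow> nat \<Rightarrow> 'n pt \<Rightarrow> 'n ctv" where
  "Yk j k = ((lie X) ^^ k) (ham_vf (zc g j))"

lemma Yk_0: "fst q \<in> S \<Longrightarrow> Yk j 0 q = ((\<chi> i. if i = j then \<i> else 0), \<chi> i. (-1) * complex_of_real (pd (pd g j) i (fst q)))"
  by (simp add: Yk_def Y0_form)

lemma Yk_1:
  assumes "fst p \<in> S"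
  shows "Yk j (Suc 0) p = (0, \<chi> i. \<i> * complex_of_real (pd (pd psi i) j (fst p)))"
proof -
  have a: "cdiffV (Yk j 0) p w = (0, \<chi> i. (-1) * (\<Sum>k\<in>UNIV. fst w $ k * complex_of_real (pd (pd (pd g j) i) k (fst p))))" for w
    by (rule cdiffV_form[OF S_open assms]) (use Yk_0 dg(3)[OF assms] in auto)
  have "Yk j (Suc 0) p = cdiffV (Yk j 0) p (X p) - cdiffV X p (Yk j 0 p)"
    by (simp add: Yk_def lie_def)
  also have "\<dots> = (0, \<chi> i. \<i> * complex_of_real (pd (pd psi i) j (fst p)))"
    using assms by (simp add: a cdiffV_X X_form Yk_0 vec_eq_iff prod_eq_iff
        if_distrib[of "\<lambda>x. x * _"] cong: if_cong)
  finally show ?thesis .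
qed

lemma Yk_ge2:
  assumes "fst p \<in> S"
  shows "Yk j (Suc (Suc k)) p = 0"
  using assms
proof (induction k arbitrary: p)
  case 0
  have a: "cdiffV (Yk j (Suc 0)) p w = (0, \<chi> i. \<i> * (\<Sum>k\<in>UNIV. fst w $ k * complex_of_real (pd (pd (pd psi i) j) k (fst p))))" for w
    by (rule cdiffV_form[OF S_open 0]) (use Yk_1 dpsi(3)[OF 0] in auto)
  have "Yk j 2 p = cdiffV (Yk j (Suc 0)) p (X p) - cdiffV X p (Yk j (Suc 0) p)"
    by (simp add: Yk_def lie_def numeral_2_eq_2)
  also have "\<dots> = 0"
    using 0 by (simp add: a cdiffV_X X_form Yk_1 vec_eq_iff prod_eq_iff)
  finally show ?case by (simp add: numeral_2_eq_2)
next
  case (Suc k)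
  have a: "cdiffV (Yk j (Suc (Suc k))) p w = (0, \<chi> i. 0 * (\<Sum>m\<in>UNIV. fst w $ m * complex_of_real (pd ((\<lambda>i x. 0) i) m (fst p))))" for w
    by (rule cdiffV_form[OF S_open Suc.prems, where c=0]) (use Suc.IH in \<open>auto simp: zero_prod_def vec_eq_iff\<close>)
  have "Yk j (Suc (Suc (Suc k))) p = cdiffV (Yk j (Suc (Suc k))) p (X p) - cdiffV X p (Yk j (Suc (Suc k)) p)"
    by (simp add: Yk_def lie_def)
  also have "\<dots> = 0"
    using Suc by (simp add: a cdiffV_X vec_eq_iff prod_eq_iff)
  finally show ?case .
qed

end

definition dzf :: "('n::finite \<Rightarrow> 'n \<Rightarrow> real) \<Rightarrow> 'n ctv \<Rightarrow> 'n \<Rightarrow> complex" where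
  "dzf M w k = (\<Sum>i\<in>UNIV. fst w $ i * complex_of_real (M k i)) + \<i> * snd w $ k"
definition dzbf :: "('n::finite \<Rightarrow> 'n \<Rightarrow> real) \<Rightarrow> 'n ctv \<Rightarrow> 'n \<Rightarrow> complex" where
  "dzbf M w k = (\<Sum>i\<in>UNIV. fst w $ i * complex_of_real (M k i)) - \<i> * snd w $ k"
definition Tset :: "('n::finite \<Rightarrow> 'n \<Rightarrow> real) \<Rightarrow> 'n ctv set" where
  "Tset M = {w. \<forall>k. dzf M w k = 0}"

lemma fst_cscale [simp]: "fst (cscale c w) = c *s fst w" and snd_cscale [simp]: "snd (cscale c w) = c *s snd w"
  by (simp_all add: cscale_def)

lemma fst_sum': "fst (\<Sum>j\<in>A. f j) = (\<Sum>j\<in>A. fst (f j))"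
  by (induction A rule: infinite_finite_induct) auto
lemma snd_sum': "snd (\<Sum>j\<in>A. f j) = (\<Sum>j\<in>A. snd (f j))"
  by (induction A rule: infinite_finite_induct) auto

lemma lin_core:
  fixes c :: "'j::finite \<Rightarrow> complex" and v :: "'j \<Rightarrow> 'n::finite ctv"
  shows "(\<Sum>i\<in>UNIV. fst (\<Sum>j\<in>UNIV. cscale (c j) (v j)) $ i * complex_of_real (M k i))
     = (\<Sum>j\<in>UNIV. c j * (\<Sum>i\<in>UNIV. fst (v j) $ i * complex_of_real (M k i)))"
    and "snd (\<Sum>j\<in>UNIV. cscale (c j) (v j)) $ k = (\<Sum>j\<in>UNIV. c j * snd (v j) $ k)"
proof -
  have f: "fst (\<Sum>j\<in>UNIV. cscale (c j) (v j)) $ i = (\<Sum>j\<in>UNIV. c j * fst (v j) $ i)" for i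
    by (simp add: fst_sum')
  have "(\<Sum>i\<in>UNIV. fst (\<Sum>j\<in>UNIV. cscale (c j) (v j)) $ i * complex_of_real (M k i))
      = (\<Sum>i\<in>UNIV. \<Sum>j\<in>UNIV. c j * fst (v j) $ i * complex_of_real (M k i))"
    by (simp add: f sum_distrib_right)
  also have "\<dots> = (\<Sum>j\<in>UNIV. \<Sum>i\<in>UNIV. c j * fst (v j) $ i * complex_of_real (M k i))"
    by (rule sum.swap)
  also have "\<dots> = (\<Sum>j\<in>UNIV. c j * (\<Sum>i\<in>UNIV. fst (v j) $ i * complex_of_real (M k i)))"
    by (simp add: sum_distrib_left mult.assoc)
  finally show "(\<Sum>i\<in>UNIV. fst (\<Sum>j\<in>UNIV. cscale (c j) (v j)) $ i * complex_of_real (M k i))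
     = (\<Sum>j\<in>UNIV. c j * (\<Sum>i\<in>UNIV. fst (v j) $ i * complex_of_real (M k i)))" .
  show "snd (\<Sum>j\<in>UNIV. cscale (c j) (v j)) $ k = (\<Sum>j\<in>UNIV. c j * snd (v j) $ k)"
    by (simp add: snd_sum')
qed

lemma dzf_lin: fixes c :: "'j::finite \<Rightarrow> complex" shows "dzf M (\<Sum>j\<in>UNIV. cscale (c j) (v j)) k = (\<Sum>j\<in>UNIV. c j * dzf M (v j) k)"
  unfolding dzf_def lin_core by (simp add: sum_distrib_left sum.distrib distrib_left mult.left_commute)

lemma dzbf_lin: fixes c :: "'j::finite \<Rightarrow> complex" shows "dzbf M (\<Sum>j\<in>UNIV. cscale (c j) (v j)) k = (\<Sum>j\<in>UNIV. c j * dzbf M (v j) k)"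
  unfolding dzbf_def lin_core by (simp add: sum_distrib_left sum_subtractf right_diff_distrib mult.left_commute)

lemma dzf_diff: "dzf M (w1 - w2) k = dzf M w1 k - dzf M w2 k"
  by (simp add: dzf_def algebra_simps sum_subtractf)
lemma dzbf_diff: "dzbf M (w1 - w2) k = dzbf M w1 k - dzbf M w2 k"
  by (simp add: dzbf_def algebra_simps sum_subtractf)

locale hmat =
  fixes M :: "'n::finite \<Rightarrow> 'n \<Rightarrow> real"
  assumes sym: "\<And>k i. M k i = M i k"
    and inj: "\<And>a::real^'n. (\<And>k. (\<Sum>i\<in>UNIV. M k i * a $ i) = 0) \<Longrightarrow> a = 0"
    and surj: "\<And>e::real^'n. \<exists>a. \<forall>k. (\<Sum>i\<in>UNIV. M k i * a $ i) = e $ k"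
begin

lemma zero_uniq:
  assumes "\<And>k. dzf M w k = 0" "\<And>k. dzbf M w k = 0"
  shows "w = 0"
proof -
  let ?A = "\<lambda>k. (\<Sum>i\<in>UNIV. fst w $ i * complex_of_real (M k i))"
  have e1: "?A k + \<i> * snd w $ k = 0" and e2: "?A k - \<i> * snd w $ k = 0" for k
    using assms(1)[of k] assms(2)[of k] by (simp_all add: dzf_def dzbf_def)
  have b: "snd w $ k = 0" for k
  proof -
    have "2 * \<i> * snd w $ k = (?A k + \<i> * snd w $ k) - (?A k - \<i> * snd w $ k)" by (simp add: algebra_simps)
    then have "2 * \<i> * snd w $ k = 0" using e1 e2 by simp
    then show ?thesis by simp
  qed
  have A: "?A k = 0" for k using e1[of k] b[of k] by simp
  have re: "cvre (fst w) = 0"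
  proof (rule inj)
    fix k
    have "Re (?A k) = 0" using A by simp
    then show "(\<Sum>i\<in>UNIV. M k i * cvre (fst w) $ i) = 0" by (simp add: cvre_def Re_sum mult.commute)
  qed
  have im: "cvim (fst w) = 0"
  proof (rule inj)
    fix k
    have "Im (?A k) = 0" using A by simp
    then show "(\<Sum>i\<in>UNIV. M k i * cvim (fst w) $ i) = 0" by (simp add: cvim_def Im_sum mult.commute)
  qed
  have "fst w = 0" using re im by (simp add: vec_eq_iff cvre_def cvim_def complex_eq_iff)
  moreover have "snd w = 0" using b by (simp add: vec_eq_iff)
  ultimately show ?thesis by (simp add: prod_eq_iff)
qed

lemma dzbar_ex1: "\<exists>!w. \<forall>k. dzf M w k = 0 \<and> dzbf M w k = (if k = j then 1 else 0)"
proof -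
  obtain a0 :: "real^'n" where a0: "\<forall>k. (\<Sum>i\<in>UNIV. M k i * a0 $ i) = ((1/2) *\<^sub>R axis j 1 :: real^'n) $ k"
    using surj by blast
  define w0 :: "'n ctv" where "w0 = ((\<chi> i. complex_of_real (a0 $ i)), (\<chi> i. if i = j then \<i> / 2 else 0))"
  have s: "(\<Sum>i\<in>UNIV. fst w0 $ i * complex_of_real (M k i)) = (if k = j then 1/2 else 0)" for k
  proof -
    have "(\<Sum>i\<in>UNIV. fst w0 $ i * complex_of_real (M k i)) = complex_of_real (\<Sum>i\<in>UNIV. M k i * a0 $ i)"
      by (simp add: w0_def mult.commute)
    also have "\<dots> = complex_of_real (if k = j then 1/2 else 0)"
    proof -
      have r: "(\<Sum>i\<in>UNIV. M k i * a0 $ i) = (if k = j then 1/2 else 0)"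
        using a0[rule_format, of k] by (cases "k = j") (simp_all add: axis_def)
      show ?thesis by (simp only: r)
    qed
    finally show ?thesis by simp
  qed
  have w0: "\<forall>k. dzf M w0 k = 0 \<and> dzbf M w0 k = (if k = j then 1 else 0)"
    by (simp add: dzf_def dzbf_def s) (simp add: w0_def)
  show ?thesis
  proof (rule ex1I[of _ w0])
    show "\<forall>k. dzf M w0 k = 0 \<and> dzbf M w0 k = (if k = j then 1 else 0)" by (rule w0)
    fix w assume w: "\<forall>k. dzf M w k = 0 \<and> dzbf M w k = (if k = j then 1 else 0)"
    have "w - w0 = 0" by (rule zero_uniq) (use w w0 in \<open>simp_all add: dzf_diff dzbf_diff\<close>)
    then show "w = w0" by simp
  qed
qed

lemma span_dzbar:
  assumes w: "\<And>j k. dzf M (W j) k = 0 \<and> dzbf M (W j) k = (if k = j then 1 else 0)"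
  shows "cspan_fam W = Tset M"
proof
  show "cspan_fam W \<subseteq> Tset M"
    using w by (auto simp: cspan_fam_def Tset_def dzf_lin)
next
  show "Tset M \<subseteq> cspan_fam W"
  proof
    fix x assume x: "x \<in> Tset M"
    define c where "c j = dzbf M x j" for j
    define x' where "x' = (\<Sum>j\<in>UNIV. cscale (c j) (W j))"
    have "x - x' = 0"
    proof (rule zero_uniq)
      fix k
      show "dzf M (x - x') k = 0" using x w by (simp add: dzf_diff x'_def dzf_lin Tset_def)
      have "dzbf M x' k = c k" using w
        by (simp add: x'_def dzbf_lin if_distrib[of "\<lambda>z. c _ * z"] cong: if_cong)
      then show "dzbf M (x - x') k = 0" by (simp add: dzbf_diff c_def)
    qed
    then have "x = x'" by simp
    then show "x \<in> cspan_fam W" unfolding cspan_fam_def x'_def by blast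
  qed
qed

lemma span_X: "cspan_fam (\<lambda>j. ((\<chi> i. if i = j then \<i> else 0), \<chi> i. - complex_of_real (M j i))) = Tset M"
  (is "cspan_fam ?X = _")
proof
  have z: "dzf M (?X j) k = 0" for j k
  proof -
    have "dzf M (?X j) k = \<i> * complex_of_real (M k j) - \<i> * complex_of_real (M j k)"
      by (simp add: dzf_def if_distrib[of "\<lambda>z. z * _"] cong: if_cong)
    then show ?thesis by (simp add: sym[of k j])
  qed
  show "cspan_fam ?X \<subseteq> Tset M"
    using z by (auto simp: cspan_fam_def Tset_def dzf_lin)
next
  show "Tset M \<subseteq> cspan_fam ?X"
  proof
    fix x assume x: "x \<in> Tset M"
    define c where "c j = - \<i> * fst x $ j" for j
    have e: "(\<Sum>j\<in>UNIV. fst x $ j * complex_of_real (M i j)) + \<i> * snd x $ i = 0" for i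
      using x by (simp add: Tset_def dzf_def)
    have "x = (\<Sum>j\<in>UNIV. cscale (c j) (?X j))"
    proof (rule prod_eqI)
      show "fst x = fst (\<Sum>j\<in>UNIV. cscale (c j) (?X j))"
        by (simp add: vec_eq_iff fst_sum' c_def if_distrib[of "\<lambda>z. _ * z"] sum_negf sum.delta sum.delta' cong: if_cong) (simp add: mult.commute mult.left_commute)
      have "snd x $ i = (\<Sum>j\<in>UNIV. c j * (- complex_of_real (M j i)))" for i
      proof -
        have "snd x $ i = \<i> * (\<Sum>j\<in>UNIV. fst x $ j * complex_of_real (M i j))"
        proof -
          have "\<i> * ((\<Sum>j\<in>UNIV. fst x $ j * complex_of_real (M i j)) + \<i> * snd x $ i) = 0" using e by simp
          then show ?thesis by (simp add: algebra_simps)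
        qed
        also have "\<dots> = (\<Sum>j\<in>UNIV. c j * (- complex_of_real (M j i)))"
          by (simp add: c_def sum_distrib_left sym[of i] algebra_simps)
        finally show ?thesis .
      qed
      then show "snd x = snd (\<Sum>j\<in>UNIV. cscale (c j) (?X j))"
        by (simp add: vec_eq_iff snd_sum')
    qed
    then show "x \<in> cspan_fam ?X" unfolding cspan_fam_def by blast
  qed
qed

end

locale toric2 = toric S g psi for S :: "(real^'n::finite) set" and g psi +
  fixes s :: real
  assumes posdef: "\<And>x v. x \<in> S \<Longrightarrow> v \<noteq> 0 \<Longrightarrow> 0 < v \<bullet> (hess (\<lambda>x. g x + s * psi x) x *v v)"
begin

abbreviation gs where "gs \<equiv> (\<lambda>x. g x + s * psi x)"

lemma Cgs: "C3 S gs" using C3_add[OF Cg C3_cmul[OF Cpsi]] .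

lemma pd1_gs: "y \<in> S \<Longrightarrow> pd gs j y = pd g j y + s * pd psi j y"
  using pd_add[OF dg(1) differentiable_mult[OF differentiable_const dpsi(1)]] pd_cmul[OF dpsi(1)]
  by simp

lemma pd2_gs:
  assumes x: "x \<in> S"
  shows "pd (pd gs j) i x = pd (pd g j) i x + s * pd (pd psi j) i x"
proof -
  have "pd (pd gs j) i x = pd (\<lambda>y. pd g j y + s * pd psi j y) i x"
    by (rule pd_local[OF S_open x]) (simp add: pd1_gs)
  also have "\<dots> = pd (pd g j) i x + s * pd (pd psi j) i x"
    using pd_add[OF dg(2)[OF x] differentiable_mult[OF differentiable_const dpsi(2)[OF x]]] pd_cmul[OF dpsi(2)[OF x]]
    by simp
  finally show ?thesis .
qed

definition Ms :: "real^'n \<Rightarrow> 'n \<Rightarrow> 'n \<Rightarrow> real" where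
  "Ms x k i = pd (pd gs k) i x"

lemma Ms_sym: "x \<in> S \<Longrightarrow> Ms x k i = Ms x i k"
  unfolding Ms_def using clairaut[OF Cgs] by blast

lemma hess_Ms:
  assumes x: "x \<in> S"
  shows "(hess gs x *v a) $ k = (\<Sum>i\<in>UNIV. Ms x k i * a $ i)"
proof -
  have "\<And>j. pd (pd gs j) k x = pd (pd gs k) j x" by (rule clairaut[OF Cgs x])
  then show ?thesis by (simp add: hess_def matrix_vector_mult_def Ms_def)
qed

lemma hmat_Ms:
  assumes x: "x \<in> S"
  shows "hmat (Ms x)"
proof
  show "Ms x k i = Ms x i k" for k i using Ms_sym[OF x] .
  have inj0: "a = 0" if "hess gs x *v a = 0" for a
  proof (rule ccontr)
    assume "a \<noteq> 0"
    then have "0 < a \<bullet> (hess gs x *v a)" using posdef[OF x] by blast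
    then show False using that by simp
  qed
  show "a = 0" if "\<And>k. (\<Sum>i\<in>UNIV. Ms x k i * a $ i) = 0" for a :: "real^'n"
    by (rule inj0) (simp add: vec_eq_iff hess_Ms[OF x] that)
  have "inj ((*v) (hess gs x))"
  proof (rule injI)
    fix a b assume "hess gs x *v a = hess gs x *v b"
    then have "hess gs x *v (a - b) = 0" by (simp add: matrix_vector_mult_diff_distrib)
    then show "a = b" using inj0[of "a - b"] by simp
  qed
  then have su: "surj ((*v) (hess gs x))" by (rule linear_inj_imp_surj[OF matrix_vector_mul_linear])
  show "\<exists>a. \<forall>k. (\<Sum>i\<in>UNIV. Ms x k i * a $ i) = e $ k" for e :: "real^'n"
  proof -
    obtain a where a: "e = hess gs x *v a" using surjD[OF su, of e] by blast
    show ?thesis by (rule exI[of _ a]) (simp add: a hess_Ms[OF x])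
  qed
qed

lemma series_sums:
  assumes p: "fst p \<in> S"
  shows "(\<lambda>k. cscale ((\<i> * complex_of_real s) ^ k / fact k) (Yk j k p)) sums
         ((\<chi> i. if i = j then \<i> else 0), \<chi> i. - complex_of_real (Ms (fst p) j i))"
proof -
  let ?f = "\<lambda>k. cscale ((\<i> * complex_of_real s) ^ k / fact k) (Yk j k p)"
  have "?f sums (\<Sum>k\<in>{0, Suc 0}. ?f k)"
  proof (rule sums_finite)
    fix n assume "n \<notin> {0, Suc 0}"
    then obtain m where "n = Suc (Suc m)" by (metis insertCI not0_implies_Suc)
    then show "?f n = 0" using Yk_ge2[OF p] by (simp add: cscale_def zero_prod_def)
  qed simp
  moreover have "(\<Sum>k\<in>{0, Suc 0}. ?f k) = ((\<chi> i. if i = j then \<i> else 0), \<chi> i. - complex_of_real (Ms (fst p) j i))"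
  proof -
    have "(\<Sum>k\<in>{0, Suc 0}. ?f k) = Yk j 0 p + cscale (\<i> * complex_of_real s) (Yk j (Suc 0) p)"
      by (simp add: cscale_def)
    also have "\<dots> = ((\<chi> i. if i = j then \<i> else 0), \<chi> i. - complex_of_real (Ms (fst p) j i))"
      using p by (simp add: Yk_0 Yk_1 cscale_def vec_eq_iff Ms_def pd2_gs clairaut[OF Cpsi p, of _ j] algebra_simps)
    finally show ?thesis .
  qed
  ultimately show ?thesis by simp
qed

lemma part1:
  assumes p: "fst p \<in> S"
  shows "summable (\<lambda>k. cscale ((\<i> * complex_of_real s) ^ k / fact k) (((lie X) ^^ k) (ham_vf (zc g j)) p))"
  using series_sums[OF p] unfolding Yk_def by (rule sums_summable)

lemma part2:
  assumes p: "fst p \<in> S"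
  shows "cspan_fam (\<lambda>j. \<Sum>k. cscale ((\<i> * complex_of_real s) ^ k / fact k) (((lie X) ^^ k) (ham_vf (zc g j)) p))
        = polarization gs p"
proof -
  let ?x = "fst p"
  interpret H: hmat "Ms ?x" by (rule hmat_Ms[OF p])
  have e1: "(\<Sum>k. cscale ((\<i> * complex_of_real s) ^ k / fact k) (((lie X) ^^ k) (ham_vf (zc g j)) p))
        = ((\<chi> i. if i = j then \<i> else 0), \<chi> i. - complex_of_real (Ms ?x j i))" for j
    using series_sums[OF p, of j] unfolding Yk_def by (rule sums_unique[symmetric])
  have cz: "cdiff (zc gs k) p w = dzf (Ms ?x) w k" for k w
    using cdiff_zc[OF Cgs[unfolded C3_def, THEN conjunct2, rule_format, OF p, THEN conjunct2, THEN conjunct1, rule_format]]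
    by (simp add: dzf_def Ms_def)
  have czb: "cdiff (\<lambda>q. cnj (zc gs k q)) p w = dzbf (Ms ?x) w k" for k w
    using cdiff_zc_cnj[OF Cgs[unfolded C3_def, THEN conjunct2, rule_format, OF p, THEN conjunct2, THEN conjunct1, rule_format]]
    by (simp add: dzbf_def Ms_def)
  have dz: "dzbar gs j p = (THE w. \<forall>k. dzf (Ms ?x) w k = 0 \<and> dzbf (Ms ?x) w k = (if k = j then 1 else 0))" for j
    by (simp add: dzbar_def cz czb)
  have W: "dzf (Ms ?x) (dzbar gs j p) k = 0 \<and> dzbf (Ms ?x) (dzbar gs j p) k = (if k = j then 1 else 0)" for j k
    unfolding dz using theI'[OF H.dzbar_ex1[of j]] by blast
  show ?thesis
    unfolding e1 polarization_def H.span_X H.span_dzbar[OF W] ..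
qed

end

lemma differentiable_prod_at:
  fixes f :: "'i \<Rightarrow> 'a::real_normed_vector \<Rightarrow> 'b::real_normed_field"
  assumes "\<And>i. i \<in> I \<Longrightarrow> f i differentiable (at x)"
  shows "(\<lambda>x. \<Prod>i\<in>I. f i x) differentiable (at x)"
proof -
  have "\<And>i. i \<in> I \<Longrightarrow> (f i has_derivative frechet_derivative (f i) (at x)) (at x)"
    using assms frechet_derivative_works by blast
  from has_derivative_prod[OF this] show ?thesis by (rule differentiableI)
qed

lemma det_differentiable:
  fixes e :: "'n::finite \<Rightarrow> 'n \<Rightarrow> 'a::real_normed_vector \<Rightarrow> complex"
  assumes "\<And>k l. e k l differentiable (at x0)"
  shows "(\<lambda>x. det (\<chi> k l. e k l x)) differentiable (at x0)"
proof -
  have "(\<lambda>x. \<Sum>p\<in>{p. p permutes (UNIV::'n set)}. of_int (sign p) * (\<Prod>i\<in>UNIV. e i (p i) x)) differentiable (at x0)"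
    by (intro differentiable_sum ballI differentiable_mult differentiable_const differentiable_prod_at assms)
      (simp add: finite_permutations)
  then show ?thesis by (simp add: det_def)
qed

lemma of_real_differentiable:
  assumes "h differentiable (at x)"
  shows "(\<lambda>x. complex_of_real (h x)) differentiable (at x)"
  using has_derivative_of_real[OF assms[unfolded frechet_derivative_works]] by (rule differentiableI)

lemma det_sum_cols:
  fixes a b :: "'n::finite \<Rightarrow> 'n \<Rightarrow> 'a::comm_ring_1"
  shows "det (\<chi> k l. a k l + b k l) = (\<Sum>S\<in>UNIV. det (\<chi> k l. if l \<in> S then b k l else a k l))"
proof -
  have dt: "det (\<chi> k l. f k l) = (\<Sum>p\<in>{p. p permutes (UNIV::'n set)}. of_int (sign p) * (\<Prod>i\<in>UNIV. f (p i) i))"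
    for f :: "'n \<Rightarrow> 'n \<Rightarrow> 'a"
  proof -
    have "det (\<chi> k l. f k l) = det (transpose (\<chi> k l. f k l))" by (simp add: det_transpose)
    also have "\<dots> = (\<Sum>p\<in>{p. p permutes (UNIV::'n set)}. of_int (sign p) * (\<Prod>i\<in>UNIV. f (p i) i))"
      by (simp add: det_def transpose_def)
    finally show ?thesis .
  qed
  have "det (\<chi> k l. a k l + b k l) = (\<Sum>p\<in>{p. p permutes (UNIV::'n set)}. of_int (sign p) *
          (\<Sum>S\<in>Pow UNIV. (\<Prod>i\<in>S. b (p i) i) * (\<Prod>i\<in>UNIV - S. a (p i) i)))"
  proof -
    have "(\<Prod>i\<in>UNIV. a (p i) i + b (p i) i) = (\<Sum>S\<in>Pow UNIV. (\<Prod>i\<in>S. b (p i) i) * (\<Prod>i\<in>UNIV - S. a (p i) i))" for p :: "'n \<Rightarrow> 'n"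
      using prod_add[of "UNIV::'n set" "\<lambda>i. b (p i) i" "\<lambda>i. a (p i) i"] by (simp add: add.commute)
    then show ?thesis unfolding dt by simp
  qed
  also have "\<dots> = (\<Sum>S\<in>UNIV. \<Sum>p\<in>{p. p permutes (UNIV::'n set)}. of_int (sign p) *
          ((\<Prod>i\<in>S. b (p i) i) * (\<Prod>i\<in>UNIV - S. a (p i) i)))"
    by (simp add: sum_distrib_left sum.swap[of _ "{p. p permutes (UNIV::'n set)}"])
  also have "\<dots> = (\<Sum>S\<in>UNIV. det (\<chi> k l. if l \<in> S then b k l else a k l))"
  proof (rule sum.cong[OF refl])
    fix S :: "'n set"
    have "(\<Prod>i\<in>UNIV. if i \<in> S then b (p i) i else a (p i) i) = (\<Prod>i\<in>S. b (p i) i) * (\<Prod>i\<in>UNIV - S. a (p i) i)" for p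
      by (simp add: prod.If_cases Compl_eq_Diff_UNIV Int_absorb1)
    then show "(\<Sum>p\<in>{p. p permutes (UNIV::'n set)}. of_int (sign p) * ((\<Prod>i\<in>S. b (p i) i) * (\<Prod>i\<in>UNIV - S. a (p i) i)))
        = det (\<chi> k l. if l \<in> S then b k l else a k l)"
      unfolding dt by simp
  qed
  finally show ?thesis .
qed

lemma det_scale_cols:
  fixes A :: "'n::finite \<Rightarrow> 'n \<Rightarrow> 'a::comm_ring_1"
  shows "det (\<chi> k l. if l \<in> S then c * A k l else A k l) = c ^ card S * det (\<chi> k l. A k l)"
proof -
  define D :: "'a^'n^'n" where "D = (\<chi> i j. if i = j then (if i \<in> S then c else 1) else 0)"
  have "(\<chi> k l. if l \<in> S then c * A k l else A k l) = (\<chi> k l. A k l) ** D"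
    by (simp add: vec_eq_iff matrix_matrix_mult_def D_def if_distrib[of "\<lambda>z. _ * z"] mult.commute cong: if_cong)
  then have "det (\<chi> k l. if l \<in> S then c * A k l else A k l) = det (\<chi> k l. A k l) * det D"
    by (simp add: det_mul)
  moreover have "det D = c ^ card S"
  proof -
    have "det D = (\<Prod>i\<in>UNIV. if i \<in> S then c else 1)"
      by (subst det_diagonal) (simp_all add: D_def)
    also have "\<dots> = c ^ card S" by (simp add: prod.If_cases Int_absorb1)
    finally show ?thesis .
  qed
  ultimately show ?thesis by (simp add: mult.commute)
qed

lemma comb_sum:
  fixes f :: "'n::finite set \<Rightarrow> 'a::comm_ring_1"
  shows "(\<Sum>l\<in>UNIV. \<Sum>S\<in>{S. card S = m}. if l \<in> S then 0 else f (insert l S))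
       = of_nat (Suc m) * (\<Sum>T\<in>{T. card T = Suc m}. f T)"
proof -
  have per: "(\<Sum>S\<in>{S. card S = m}. if l \<in> S then 0 else f (insert l S))
      = (\<Sum>T\<in>{T. card T = Suc m}. if l \<in> T then f T else 0)" for l
  proof -
    have "(\<Sum>S\<in>{S. card S = m}. if l \<in> S then 0 else f (insert l S))
        = (\<Sum>S\<in>{S. card S = m \<and> l \<notin> S}. f (insert l S))"
      by (simp add: sum.If_cases Int_def Collect_conj_eq[symmetric] conj_commute)
    also have "\<dots> = (\<Sum>T\<in>{T. card T = Suc m \<and> l \<in> T}. f T)"
    proof (rule sum.reindex_bij_witness[where i="\<lambda>T. T - {l}" and j="insert l"])
      fix S assume "S \<in> {S. card S = m \<and> l \<notin> S}"
      then show "insert l S - {l} = S" "insert l S \<in> {T. card T = Suc m \<and> l \<in> T}" "f (insert l S) = f (insert l S)"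
        by auto
    next
      fix T assume T: "T \<in> {T. card T = Suc m \<and> l \<in> T}"
      then show "insert l (T - {l}) = T" by auto
      show "T - {l} \<in> {S. card S = m \<and> l \<notin> S}" using T by auto
    qed
    also have "\<dots> = (\<Sum>T\<in>{T. card T = Suc m}. if l \<in> T then f T else 0)"
      by (simp add: sum.If_cases Int_def Collect_conj_eq[symmetric])
    finally show ?thesis .
  qed
  have "(\<Sum>l\<in>UNIV. \<Sum>S\<in>{S. card S = m}. if l \<in> S then 0 else f (insert l S))
      = (\<Sum>T\<in>{T. card T = Suc m}. \<Sum>l\<in>UNIV. if l \<in> T then f T else 0)"
    by (simp add: per sum.swap[of _ UNIV])
  also have "\<dots> = (\<Sum>T\<in>{T. card T = Suc m}. of_nat (Suc m) * f T)"
    by (rule sum.cong[OF refl]) (simp add: sum.If_cases Int_absorb1)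
  also have "\<dots> = of_nat (Suc m) * (\<Sum>T\<in>{T. card T = Suc m}. f T)"
    by (simp add: sum_distrib_left)
  finally show ?thesis .
qed

context toric2
begin

definition Gm :: "real^'n \<Rightarrow> 'n \<Rightarrow> 'n \<Rightarrow> real" where "Gm x k i = pd (pd g k) i x"
definition Hp :: "real^'n \<Rightarrow> 'n \<Rightarrow> 'n \<Rightarrow> real" where "Hp x k i = pd (pd psi k) i x"
definition colp :: "real^'n \<Rightarrow> ('n \<Rightarrow> 'n ctv) \<Rightarrow> 'n \<Rightarrow> 'n \<Rightarrow> complex" where
  "colp x v l k = (\<Sum>i\<in>UNIV. fst (v l) $ i * complex_of_real (Hp x k i))"
definition EE :: "real^'n \<Rightarrow> ('n \<Rightarrow> 'n ctv) \<Rightarrow> 'n set \<Rightarrow> complex \<Rightarrow> complex" where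
  "EE x v T t = det (\<chi> k l. if l \<in> T then t * colp x v l k else dzf (Gm x) (v l) k)"
definition Fx :: "nat \<Rightarrow> real^'n \<Rightarrow> ('n \<Rightarrow> 'n ctv) \<Rightarrow> complex" where
  "Fx m x v = fact m * (\<Sum>T\<in>{T. card T = m}. EE x v T (- \<i>))"

lemma Fx_diff:
  assumes x: "x \<in> S"
  shows "(\<lambda>y. Fx m y v) differentiable (at x)"
proof -
  have cp: "(\<lambda>y. colp y v l k) differentiable (at x)" for l k
    unfolding colp_def Hp_def
    by (intro differentiable_sum ballI differentiable_mult differentiable_const of_real_differentiable dpsi(3)[OF x]) simp
  have cz: "(\<lambda>y. dzf (Gm y) (v l) k) differentiable (at x)" for l k
    unfolding dzf_def Gm_def
    by (intro differentiable_add differentiable_sum ballI differentiable_mult differentiable_const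
        of_real_differentiable dg(3)[OF x]) simp
  have en: "(\<lambda>y. if l \<in> T then t * colp y v l k else dzf (Gm y) (v l) k) differentiable (at x)" for T t l k
    using cp cz by (cases "l \<in> T") (auto intro: differentiable_mult differentiable_const)
  have "(\<lambda>y. EE y v T t) differentiable (at x)" for T t
    unfolding EE_def using det_differentiable[of "\<lambda>k l y. if l \<in> T then t * colp y v l k else dzf (Gm y) (v l) k", OF en] .
  then show ?thesis unfolding Fx_def
    by (intro differentiable_mult differentiable_const differentiable_sum ballI) simp_all
qed

lemma fst_X_zero: "fst q \<in> S \<Longrightarrow> fst (cre (X q)) = 0 \<and> fst (cim (X q)) = 0"
  by (simp add: X_form cre_def cim_def cvre_def cvim_def vec_eq_iff)

lemma cdiff_Fx_X:
  assumes q: "fst q \<in> S"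
  shows "cdiff (\<lambda>q'. Fx m (fst q') v) q (X q) = 0"
proof -
  let ?D = "frechet_derivative (\<lambda>y. Fx m y v) (at (fst q))"
  have hd: "((\<lambda>q'. Fx m (fst q') v) has_derivative (\<lambda>u. ?D (fst u))) (at q)"
    using hd_fst[OF Fx_diff[OF q, unfolded frechet_derivative_works]] .
  have l: "linear ?D" by (rule linear_frechet_derivative[OF Fx_diff[OF q]])
  show ?thesis using cdiff_hd[OF hd] fst_X_zero[OF q] linear_0[OF l] by simp
qed

lemma EE_upd:
  fixes v :: "'n \<Rightarrow> 'n ctv" and l :: 'n
  assumes q: "fst q \<in> S"
  defines "u \<equiv> cdiffV X q (v l)"
  shows "EE (fst q) (v(l := u)) T (- \<i>) = (if l \<in> T then 0 else EE (fst q) v (insert l T) (- \<i>))"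
proof -
  let ?x = "fst q"
  have fu: "fst u = 0" by (simp add: u_def cdiffV_X[OF q])
  have dzu: "dzf (Gm ?x) u k = - \<i> * colp ?x v l k" for k
    by (simp add: u_def cdiffV_X[OF q] dzf_def colp_def Hp_def)
  have cpu: "colp ?x (v(l := u)) l k = 0" for k by (simp add: colp_def fu)
  show ?thesis
  proof (cases "l \<in> T")
    case True
    have "column l (\<chi> k l'. if l' \<in> T then - \<i> * colp ?x (v(l := u)) l' k else dzf (Gm ?x) ((v(l := u)) l') k) = 0"
      using True by (simp add: column_def vec_eq_iff cpu)
    then show ?thesis using True by (simp add: EE_def det_zero_column)
  next
    case False
    have "(\<chi> k l'. if l' \<in> T then - \<i> * colp ?x (v(l := u)) l' k else dzf (Gm ?x) ((v(l := u)) l') k)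
        = (\<chi> k l'. if l' \<in> insert l T then - \<i> * colp ?x v l' k else dzf (Gm ?x) (v l') k)"
      using False by (auto simp: vec_eq_iff dzu colp_def)
    then show ?thesis using False by (simp add: EE_def)
  qed
qed

lemma iter_formula:
  "fst q \<in> S \<Longrightarrow> ((lieF X) ^^ m) (dZ g) q v = Fx m (fst q) v"
proof (induction m arbitrary: q v)
  case 0
  have c: "{T::'n set. card T = 0} = {{}}" by auto
  show ?case using 0
    by (simp add: Fx_def c EE_def dZ_def cdiff_zc[OF dg(2)[OF 0]] dzf_def Gm_def)
next
  case (Suc m)
  let ?x = "fst q"
  let ?F = "((lieF X) ^^ m) (dZ g)"
  have o: "open (S \<times> (UNIV :: (real^'n) set))" using S_open by (simp add: open_Times)
  have qin: "q \<in> S \<times> UNIV" using Suc.prems by (cases q) auto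
  have a: "cdiff (\<lambda>q'. ?F q' v) q (X q) = 0"
  proof -
    have "frechet_derivative (\<lambda>q'. ?F q' v) (at q) = frechet_derivative (\<lambda>q'. Fx m (fst q') v) (at q)"
      by (rule fd_local[OF o qin]) (auto simp: Suc.IH)
    then have "cdiff (\<lambda>q'. ?F q' v) q (X q) = cdiff (\<lambda>q'. Fx m (fst q') v) q (X q)"
      by (simp add: cdiff_def)
    then show ?thesis using cdiff_Fx_X[OF Suc.prems] by simp
  qed
  have b: "?F q (v(l := cdiffV X q (v l))) = fact m * (\<Sum>T\<in>{T. card T = m}. if l \<in> T then 0 else EE ?x v (insert l T) (- \<i>))" for l
    using Suc.IH[OF Suc.prems] EE_upd[OF Suc.prems] by (simp add: Fx_def)
  have "((lieF X) ^^ Suc m) (dZ g) q v = cdiff (\<lambda>q'. ?F q' v) q (X q) + (\<Sum>l\<in>UNIV. ?F q (v(l := cdiffV X q (v l))))"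
    by (simp add: lieF_def)
  also have "\<dots> = fact m * (\<Sum>l\<in>UNIV. \<Sum>T\<in>{T. card T = m}. if l \<in> T then 0 else EE ?x v (insert l T) (- \<i>))"
    by (simp add: a b sum_distrib_left)
  also have "\<dots> = fact m * (of_nat (Suc m) * (\<Sum>T\<in>{T. card T = Suc m}. EE ?x v T (- \<i>)))"
    by (simp only: comb_sum[where f="\<lambda>T. EE (fst q) v T (- \<i>)"])
  also have "\<dots> = Fx (Suc m) ?x v"
    by (simp add: Fx_def algebra_simps)
  finally show ?case .
qed

lemma EE_scale: "EE x v T (c * t) = c ^ card T * EE x v T t"
proof -
  have "EE x v T (c * t) = det (\<chi> k l. if l \<in> T then c * (if l \<in> T then t * colp x v l k else dzf (Gm x) (v l) k)
                                        else (if l \<in> T then t * colp x v l k else dzf (Gm x) (v l) k))"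
    unfolding EE_def by (rule arg_cong[where f=det]) (simp add: vec_eq_iff)
  also have "\<dots> = c ^ card T * EE x v T t"
    unfolding EE_def by (rule det_scale_cols)
  finally show ?thesis .
qed

lemma part3:
  assumes q: "fst q \<in> S"
  shows "(\<lambda>k. (\<i> * complex_of_real s) ^ k / fact k * ((lieF X) ^^ k) (dZ g) q v) sums dZ gs q v"
proof -
  let ?x = "fst q"
  let ?f = "\<lambda>k. (\<i> * complex_of_real s) ^ k / fact k * ((lieF X) ^^ k) (dZ g) q v"
  have t: "?f k = (\<Sum>T\<in>{T. card T = k}. EE ?x v T (complex_of_real s))" for k
  proof -
    have "?f k = (\<i> * complex_of_real s) ^ k * (\<Sum>T\<in>{T. card T = k}. EE ?x v T (- \<i>))"
      by (simp add: iter_formula[OF q] Fx_def)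
    also have "\<dots> = (\<Sum>T\<in>{T. card T = k}. (\<i> * complex_of_real s) ^ card T * EE ?x v T (- \<i>))"
      by (simp add: sum_distrib_left)
    also have "\<dots> = (\<Sum>T\<in>{T. card T = k}. EE ?x v T ((\<i> * complex_of_real s) * (- \<i>)))"
      by (simp only: EE_scale)
    also have "\<dots> = (\<Sum>T\<in>{T. card T = k}. EE ?x v T (complex_of_real s))"
      by (simp add: algebra_simps)
    finally show ?thesis .
  qed
  have cardle: "card (T::'n set) \<le> CARD('n)" for T by (rule card_mono) auto
  have "?f sums (\<Sum>k\<in>{..CARD('n)}. ?f k)"
  proof (rule sums_finite)
    fix k assume "k \<notin> {..CARD('n)}"
    then have e: "{T::'n set. card T = k} = {}" using cardle by (auto simp: not_le) (metis not_le)
    have "?f k = (\<Sum>T\<in>{T. card T = k}. EE ?x v T (complex_of_real s))" by (rule t)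
    then show "?f k = 0" by (simp only: e sum.empty)
  qed simp
  moreover have "(\<Sum>k\<in>{..CARD('n)}. ?f k) = dZ gs q v"
  proof -
    have "(\<Sum>k\<in>{..CARD('n)}. ?f k) = (\<Sum>k\<in>{..CARD('n)}. \<Sum>T\<in>{T\<in>UNIV. card T = k}. EE ?x v T (complex_of_real s))"
      by (rule sum.cong[OF refl]) (simp only: t UNIV_I simp_thms)
    also have "\<dots> = (\<Sum>T\<in>UNIV. EE ?x v T (complex_of_real s))"
      by (rule sum.group) (auto simp: cardle)
    also have "\<dots> = det (\<chi> k l. dzf (Gm ?x) (v l) k + complex_of_real s * colp ?x v l k)"
      unfolding EE_def by (rule det_sum_cols[symmetric])
    also have "\<dots> = dZ gs q v"
    proof -
      have "dzf (Gm ?x) w k + complex_of_real s * colp' = dzf (Ms ?x) w k"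
        if "colp' = (\<Sum>i\<in>UNIV. fst w $ i * complex_of_real (Hp ?x k i))" for w k colp'
        using that by (simp add: dzf_def Gm_def Hp_def Ms_def pd2_gs[OF q] sum_distrib_left sum.distrib
            algebra_simps)
      then have e: "dzf (Gm ?x) (v l) k + complex_of_real s * colp ?x v l k = cdiff (zc gs k) q (v l)" for l k
        using cdiff_zc[OF Cgs[unfolded C3_def, THEN conjunct2, rule_format, OF q, THEN conjunct2, THEN conjunct1, rule_format]]
        by (simp add: colp_def dzf_def Ms_def)
      show ?thesis by (simp add: e dZ_def)
    qed
    finally show ?thesis .
  qed
  ultimately show ?thesis by simp
qed

end


theorem mainTheorem1:
  fixes nu :: "'r::finite \<Rightarrow> int^'n::finite" and lam :: "'r \<Rightarrow> real"
    and g psi :: "real^'n \<Rightarrow> real" and s :: real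
  assumes "delzant nu lam"
    and "sympl_potential nu lam g"
    and "smooth_upto (polytope nu lam) psi"
    and "strongly_convex_on (polytope nu lam) psi"
    and "\<forall>t>0. sympl_potential nu lam (\<lambda>x. g x + t * psi x)"
    and "s > 0"
  shows "(\<forall>p\<in>chart nu lam. \<forall>j.
            summable (\<lambda>k. cscale ((\<i> * complex_of_real s) ^ k / fact k)
                              (((lie (ham_vf (lift psi))) ^^ k) (ham_vf (zc g j)) p)))
       \<and> (\<forall>p\<in>chart nu lam.
            cspan_fam (\<lambda>j. \<Sum>k. cscale ((\<i> * complex_of_real s) ^ k / fact k)
                              (((lie (ham_vf (lift psi))) ^^ k) (ham_vf (zc g j)) p))
            = polarization (\<lambda>x. g x + s * psi x) p)
       \<and> (\<forall>p\<in>chart nu lam. \<forall>v.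
            (\<lambda>k. (\<i> * complex_of_real s) ^ k / fact k *
                  ((lieF (ham_vf (lift psi))) ^^ k) (dZ g) p v)
            sums dZ (\<lambda>x. g x + s * psi x) p v)"
proof -
  let ?S = "interior (polytope nu lam)"
  obtain \<phi> where phi: "smooth_upto (polytope nu lam) \<phi>" "\<forall>x\<in>?S. g x = gP nu lam x + \<phi> x"
    using assms(2) unfolding sympl_potential_def by blast
  have Cg: "C3 ?S g"
    by (rule C3_local[OF C3_add[OF gP_C3[OF assms(1)] smooth_upto_C3[OF phi(1)]]]) (use phi(2) in auto)
  have Cpsi: "C3 ?S psi" by (rule smooth_upto_C3[OF assms(3)])
  have sp: "sympl_potential nu lam (\<lambda>x. g x + s * psi x)" using assms(5,6) by blast
  have pd: "\<And>x v. x \<in> ?S \<Longrightarrow> v \<noteq> 0 \<Longrightarrow> 0 < v \<bullet> (hess (\<lambda>x. g x + s * psi x) x *v v)"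
    using sp unfolding sympl_potential_def by blast
  interpret T: toric2 ?S g psi s
    by unfold_locales (use Cg Cpsi pd in auto)
  have ch: "p \<in> chart nu lam \<Longrightarrow> fst p \<in> ?S" for p by (auto simp: chart_def)
  show ?thesis
    using T.part1 T.part2 T.part3 ch by blast
qed

end
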